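(* Assume (A2) and (A3). If $\frac{\log p}{\rho_*n}\to0$, then $$\left\|D\,\mathrm{diag}\!\left(\tfrac1n\tilde X^\top\tilde X\right)-\tilde D\,\mathrm{diag}(\Sigma_0)\right\|_\infty\le O_{\mathbb P}\!\left(\sigma_x^2\sqrt{\frac{\log p}{\rho_*^3n}}\right).$$
   Context: (A2) rows of $X\in\mathbb R^{n\times p}$ i.i.d. zero-mean sub-Gaussian with covariance $\Sigma_0$ and parameter $\sigma_x$. (A3) $R_{ij}\sim$ Bernoulli$(\rho_j)$ independent of $X$, $\rho_*=\min_j\rho_j>0$. $\tilde X_{ij}=R_{ij}X_{ij}/\rho_j$; $D=\mathrm{diag}(1-\rho_1,\dots,1-\rho_p)$; $\tilde D=\mathrm{diag}(1/\rho_1-1,\dots,1/\rho_p-1)$; $\mathrm{diag}(A)$ is the diagonal matrix with the diagonal of $A$; $\|\cdot\|_\infty$ is the entrywise maximum. Asymptotics as $n\to\infty$. *)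

theory Defs
  imports "HOL-Probability.Probability"
begin

definition subgaussian_vec :: "'a measure \<Rightarrow> nat \<Rightarrow> ('a \<Rightarrow> nat \<Rightarrow> real) \<Rightarrow> real \<Rightarrow> bool" where
  "subgaussian_vec M p x \<sigma> \<longleftrightarrow>
     (\<forall>v::nat \<Rightarrow> real. (\<Sum>j<p. (v j)\<^sup>2) = 1 \<longrightarrow>
        (\<forall>t::real. integrable M (\<lambda>\<omega>. exp (t * (\<Sum>j<p. v j * x \<omega> j))) \<and>
           (\<integral>\<omega>. exp (t * (\<Sum>j<p. v j * x \<omega> j)) \<partial>M) \<le> exp (\<sigma>\<^sup>2 * t\<^sup>2 / 2)))"

definition mean_zero_cov :: "'a measure \<Rightarrow> nat \<Rightarrow> ('a \<Rightarrow> nat \<Rightarrow> real) \<Rightarrow> (nat \<Rightarrow> nat \<Rightarrow> real) \<Rightarrow> bool" where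
  "mean_zero_cov M p x \<Sigma> \<longleftrightarrow>
     (\<forall>j<p. integrable M (\<lambda>\<omega>. x \<omega> j) \<and> (\<integral>\<omega>. x \<omega> j \<partial>M) = 0) \<and>
     (\<forall>j<p. \<forall>k<p. integrable M (\<lambda>\<omega>. x \<omega> j * x \<omega> k) \<and>
        (\<integral>\<omega>. x \<omega> j * x \<omega> k \<partial>M) = \<Sigma> j k)"

definition bigO_P :: "(nat \<Rightarrow> 'a measure) \<Rightarrow> (nat \<Rightarrow> 'a \<Rightarrow> real) \<Rightarrow> (nat \<Rightarrow> real) \<Rightarrow> bool" where
  "bigO_P M Y a \<longleftrightarrow>
     (\<forall>\<epsilon>>0. \<exists>C. \<forall>\<^sub>F n in sequentially.
        measure (M n) {\<omega> \<in> space (M n). \<bar>Y n \<omega>\<bar> > C * a n} \<le> \<epsilon>)"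

end

theory Submission
  imports Defs
begin


lemma pow_fact_le_exp:
  fixes y :: real assumes "0 \<le> y" shows "y ^ m / fact m \<le> exp y"
proof -
  have s: "(\<lambda>n. y ^ n / fact n) sums exp y"
    using exp_converges[of y] by (simp add: divide_inverse_commute scaleR_conv_of_real)
  have "(\<Sum>n\<in>{m}. y ^ n / fact n) \<le> (\<Sum>n. y ^ n / fact n)"
    by (rule sum_le_suminf) (use s assms in \<open>auto simp: sums_iff\<close>)
  then show ?thesis using s by (simp add: sums_iff)
qed

lemma pow_even_le_cosh:
  fixes x t :: real assumes "0 < t"
  shows "x ^ (2*k) \<le> fact (2*k) / t ^ (2*k) * (exp (t*x) + exp (-(t*x)))"
proof -
  have 0: "\<bar>t*x\<bar> ^ (2*k) / fact (2*k) \<le> exp \<bar>t*x\<bar>" by (rule pow_fact_le_exp) simp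
  have 2: "exp \<bar>t*x\<bar> \<le> exp (t*x) + exp (-(t*x))"
  proof (cases "t*x \<ge> 0")
    case True
    then have "exp \<bar>t*x\<bar> = exp (t*x)" by simp
    then show ?thesis using exp_gt_zero[of "-(t*x)"] by linarith
  next
    case False
    then have "exp \<bar>t*x\<bar> = exp (-(t*x))" by simp
    then show ?thesis using exp_gt_zero[of "(t*x)"] by linarith
  qed
  have 3: "\<bar>t*x\<bar> ^ (2*k) = t^(2*k) * x^(2*k)"
    by (simp add: power_mult power_mult_distrib)
  have 4: "t^(2*k) > 0" using assms by simp
  have "t^(2*k) * x^(2*k) / fact (2*k) \<le> exp (t*x) + exp (-(t*x))" using 0 2 unfolding 3 by linarith
  then have "t^(2*k) * x^(2*k) \<le> (exp (t*x) + exp (-(t*x))) * fact (2*k)"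
    by (simp add: divide_le_eq)
  then have "x^(2*k) \<le> (exp (t*x) + exp (-(t*x))) * fact (2*k) / t^(2*k)"
    using 4 by (simp add: le_divide_eq mult.commute)
  then show ?thesis by (simp add: mult.commute)
qed
lemma fact_double_le: "fact (2*k) \<le> (4::real)^k * (fact k)^2"
proof (induction k)
  case 0 then show ?case by simp
next
  case (Suc k)
  have e: "fact (2 * Suc k) = real (2*k+2) * real (2*k+1) * fact (2*k)"
    by (simp add: fact_Suc algebra_simps)
  have a: "real (2*k+2) * real (2*k+1) \<le> 4 * (real k + 1)^2" by (simp add: power2_eq_square algebra_simps)
  have "real (2*k+2) * real (2*k+1) * fact (2*k) \<le> (4 * (real k + 1)^2) * (4^k * (fact k)^2)"
    by (rule mult_mono[OF a Suc.IH]) auto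
  also have "\<dots> = 4 ^ Suc k * (fact (Suc k))^2"
    by (simp add: fact_Suc power2_eq_square algebra_simps)
  finally show ?case using e by simp
qed

lemma fact_le_pow_self: "fact k \<le> (real k)^k"
proof (induction k)
  case 0 then show ?case by simp
next
  case (Suc k)
  have "fact (Suc k) = real (Suc k) * fact k" by (simp add: fact_Suc)
  also have "\<dots> \<le> real (Suc k) * real k ^ k" using Suc.IH by (intro mult_left_mono) auto
  also have "real k ^ k \<le> real (Suc k) ^ k" by (rule power_mono) auto
  then have "real (Suc k) * real k ^ k \<le> real (Suc k) * real (Suc k) ^ k" by (intro mult_left_mono) auto
  finally show ?case by simp
qed



lemma moment_bound:
  fixes M :: "'a measure" and x :: "'a \<Rightarrow> real"
  assumes P: "prob_space M" and xm: "x \<in> borel_measurable M" and v: "v > 0"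
    and mgf: "\<And>t. integrable M (\<lambda>\<omega>. exp (t * x \<omega>)) \<and> (\<integral>\<omega>. exp (t * x \<omega>) \<partial>M) \<le> exp (v * t\<^sup>2 / 2)"
    and k: "k \<ge> 1"
  shows "integrable M (\<lambda>\<omega>. x \<omega> ^ (2*k))"
    and "(\<integral>\<omega>. x \<omega> ^ (2*k) \<partial>M) \<le> 2 * fact k * (2 * exp 1 * v) ^ k"
proof -
  interpret prob_space M by (rule P)
  define t where "t = sqrt (2 * real k / v)"
  have t: "t > 0" using v k by (simp add: t_def)
  have t2: "t\<^sup>2 = 2 * real k / v" using v by (simp add: t_def)
  define c where "c = fact (2*k) / t ^ (2*k)"
  define g where "g = (\<lambda>\<omega>. c * (exp (t * x \<omega>) + exp ((-t) * x \<omega>)))"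
  have gi: "integrable M g" unfolding g_def using mgf[of t] mgf[of "-t"] by auto
  have le: "x \<omega> ^ (2*k) \<le> g \<omega>" for \<omega>
    using pow_even_le_cosh[OF t, of "x \<omega>" k] by (simp add: g_def c_def)
  show int: "integrable M (\<lambda>\<omega>. x \<omega> ^ (2*k))"
  proof (rule Bochner_Integration.integrable_bound[OF gi])
    show "(\<lambda>\<omega>. x \<omega> ^ (2*k)) \<in> borel_measurable M" using xm by measurable
    show "AE \<omega> in M. norm (x \<omega> ^ (2*k)) \<le> norm (g \<omega>)"
    proof (rule AE_I2)
      fix \<omega> have "0 \<le> x \<omega> ^ (2*k)" by (simp add: power_mult)
      then show "norm (x \<omega> ^ (2*k)) \<le> norm (g \<omega>)" using le[of \<omega>] by simp
    qed
  qed
  have "(\<integral>\<omega>. x \<omega> ^ (2*k) \<partial>M) \<le> (\<integral>\<omega>. g \<omega> \<partial>M)"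
    by (rule integral_mono[OF int gi]) (use le in auto)
  also have "(\<integral>\<omega>. g \<omega> \<partial>M) = c * ((\<integral>\<omega>. exp (t * x \<omega>) \<partial>M) + (\<integral>\<omega>. exp ((-t) * x \<omega>) \<partial>M))"
    unfolding g_def using mgf[of t] mgf[of "-t"] by simp
  also have "\<dots> \<le> c * (exp (v * t\<^sup>2 / 2) + exp (v * (-t)\<^sup>2 / 2))"
    using mgf[of t] mgf[of "-t"] by (intro mult_left_mono add_mono) (auto simp: c_def)
  also have "\<dots> = 2 * c * exp (real k)"
    using v t2 by simp
  also have "exp (real k) = (exp 1) ^ k" by (simp add: exp_of_nat_mult[symmetric])
  also have "c = fact (2*k) * (v / (2 * real k)) ^ k"
  proof -
    have "t ^ (2*k) = (2 * real k / v) ^ k" by (simp add: power_mult t2)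
    then show ?thesis using v k by (simp add: c_def power_divide)
  qed
  also have "2 * (fact (2*k) * (v / (2 * real k)) ^ k) * exp 1 ^ k
      \<le> 2 * ((4 ^ k * (fact k)\<^sup>2) * (v / (2 * real k)) ^ k) * exp 1 ^ k"
    using fact_double_le[of k] v by (intro mult_right_mono mult_left_mono) auto
  also have "2 * ((4 ^ k * (fact k)\<^sup>2) * (v / (2 * real k)) ^ k) * exp 1 ^ k
      = 2 * fact k * (2 * exp 1 * v) ^ k * (fact k / real k ^ k)"
  proof -
    have alg: "2 * ((A*A * F\<^sup>2) * (V / (A * B))) * E = 2 * F * (A * E * V) * (F / B)"
      if "A \<noteq> 0" "B \<noteq> 0" for A B F V E :: real
      using that by (simp add: field_simps power2_eq_square)
    have "(4::real)^k = 2^k * 2^k" by (simp flip: power_mult_distrib)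
    moreover have "(v / (2 * real k)) ^ k = v^k / (2^k * real k ^ k)" by (simp add: power_divide power_mult_distrib)
    moreover have "(2 * exp 1 * v) ^ k = 2^k * exp 1 ^ k * v ^ k" by (simp add: power_mult_distrib)
    ultimately show ?thesis using alg[of "2^k" "real k ^ k" "fact k" "v^k" "exp 1 ^ k"] k by simp
  qed
  also have "\<dots> \<le> 2 * fact k * (2 * exp 1 * v) ^ k * 1"
  proof (intro mult_left_mono)
    show "fact k / real k ^ k \<le> 1" using fact_le_pow_self[of k] k by (simp add: divide_le_eq)
  qed (use v in auto)
  finally show "(\<integral>\<omega>. x \<omega> ^ (2*k) \<partial>M) \<le> 2 * fact k * (2 * exp 1 * v) ^ k" by simp
qed



lemma exp_tail_sums:
  fixes y :: real
  shows "(\<lambda>n. y ^ (n+2) / fact (n+2)) sums (exp y - 1 - y)"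
proof -
  have s: "(\<lambda>n. y ^ n / fact n) sums exp y"
    using exp_converges[of y] by (simp add: divide_inverse_commute scaleR_conv_of_real)
  from sums_split_initial_segment[OF s, of 2]
  show ?thesis by (simp add: lessThan_nat_numeral diff_diff_eq add.commute)
qed

lemma exp_neg_le_quad:
  fixes y :: real assumes "0 \<le> y"
  shows "exp (-y) \<le> 1 - y + y\<^sup>2 / 2"
proof -
  define f where "f = (\<lambda>t::real. 1 - t + t\<^sup>2 / 2 - exp (-t))"
  have "f 0 \<le> f y"
  proof (rule DERIV_nonneg_imp_increasing_open[OF assms])
    fix x :: real assume x: "0 < x" "x < y"
    have "(f has_real_derivative (-1 + x + exp (-x))) (at x)"
      unfolding f_def by (auto intro!: derivative_eq_intros)
    moreover have "0 \<le> -1 + x + exp (-x)" using exp_ge_add_one_self[of "-x"] by simp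
    ultimately show "\<exists>d. (f has_real_derivative d) (at x) \<and> 0 \<le> d" by blast
  next
    show "continuous_on {0..y} f" unfolding f_def by (intro continuous_intros) auto
  qed
  then show ?thesis by (simp add: f_def)
qed




lemma Z_moment_eq:
  fixes M :: "'a measure" and R X :: "'a \<Rightarrow> real"
  assumes P: "prob_space M" and Rm: "R \<in> borel_measurable M" and Xm: "X \<in> borel_measurable M"
    and ind: "prob_space.indep_var M borel R borel X"
    and R01: "\<And>\<omega>. \<omega> \<in> space M \<Longrightarrow> R \<omega> \<in> {0,1}"
    and Rp: "measure M {\<omega>\<in>space M. R \<omega> = 1} = \<rho>" and \<rho>: "0 < \<rho>"
    and k: "k \<ge> 1" and Xi: "integrable M (\<lambda>\<omega>. X \<omega> ^ (2*k))"
  shows "integrable M (\<lambda>\<omega>. ((R \<omega> * X \<omega> / \<rho>)\<^sup>2) ^ k)"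
    and "(\<integral>\<omega>. ((R \<omega> * X \<omega> / \<rho>)\<^sup>2) ^ k \<partial>M) = \<rho> * (\<integral>\<omega>. X \<omega> ^ (2*k) \<partial>M) / \<rho> ^ (2*k)"
proof -
  interpret prob_space M by (rule P)
  have eq: "((R \<omega> * X \<omega> / \<rho>)\<^sup>2) ^ k = R \<omega> * X \<omega> ^ (2*k) / \<rho> ^ (2*k)" if "\<omega> \<in> space M" for \<omega>
  proof -
    have "((R \<omega> * X \<omega> / \<rho>)\<^sup>2) ^ k = R \<omega> ^ (2*k) * X \<omega> ^ (2*k) / \<rho> ^ (2*k)"
      by (simp add: power_mult[symmetric] power_mult_distrib power_divide mult.commute)
    also have "R \<omega> ^ (2*k) = R \<omega>" using R01[OF that] k by auto
    finally show ?thesis .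
  qed
  have RI: "integrable M R"
  proof (rule integrable_const_bound[where B=1])
    show "AE x in M. norm (R x) \<le> 1"
      by (rule AE_I2) (use R01 in \<open>fastforce\<close>)
  qed (use Rm in auto)
  have ER: "(\<integral>\<omega>. R \<omega> \<partial>M) = \<rho>"
  proof -
    have "(\<integral>\<omega>. R \<omega> \<partial>M) = (\<integral>\<omega>. indicator {\<omega>\<in>space M. R \<omega> = 1} \<omega> \<partial>M)"
      by (rule Bochner_Integration.integral_cong[OF refl]) (use R01 in \<open>auto simp: indicator_def\<close>)
    also have "\<dots> = \<rho>" using Rp by (simp add: Int_absorb2 subset_eq)
    finally show ?thesis .
  qed
  have ind2: "indep_var borel R borel (\<lambda>\<omega>. X \<omega> ^ (2*k))"
    using indep_var_compose[OF ind, of "\<lambda>x. x" borel "\<lambda>x. x ^ (2*k)" borel]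
    by (simp add: o_def)
  have prodI: "integrable M (\<lambda>\<omega>. R \<omega> * X \<omega> ^ (2*k))"
    by (rule indep_var_integrable[OF ind2 RI Xi])
  have prodE: "(\<integral>\<omega>. R \<omega> * X \<omega> ^ (2*k) \<partial>M) = \<rho> * (\<integral>\<omega>. X \<omega> ^ (2*k) \<partial>M)"
    using indep_var_lebesgue_integral[OF ind2 RI Xi] ER by simp
  show "integrable M (\<lambda>\<omega>. ((R \<omega> * X \<omega> / \<rho>)\<^sup>2) ^ k)"
    using prodI by (subst Bochner_Integration.integrable_cong[OF refl eq]) auto
  have "(\<integral>\<omega>. ((R \<omega> * X \<omega> / \<rho>)\<^sup>2) ^ k \<partial>M) = (\<integral>\<omega>. R \<omega> * X \<omega> ^ (2*k) / \<rho> ^ (2*k) \<partial>M)"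
    by (rule Bochner_Integration.integral_cong[OF refl eq])
  also have "\<dots> = \<rho> * (\<integral>\<omega>. X \<omega> ^ (2*k) \<partial>M) / \<rho> ^ (2*k)"
    using prodE by simp
  finally show "(\<integral>\<omega>. ((R \<omega> * X \<omega> / \<rho>)\<^sup>2) ^ k \<partial>M) = \<rho> * (\<integral>\<omega>. X \<omega> ^ (2*k) \<partial>M) / \<rho> ^ (2*k)" .
qed




lemma mgf_upper:
  fixes M :: "'a measure" and Z :: "'a \<Rightarrow> real"
  assumes P: "prob_space M" and Zm: "Z \<in> borel_measurable M"
    and Z0: "\<And>\<omega>. \<omega> \<in> space M \<Longrightarrow> 0 \<le> Z \<omega>"
    and ZI: "\<And>k. k \<ge> 1 \<Longrightarrow> integrable M (\<lambda>\<omega>. Z \<omega> ^ k)"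
    and ZB: "\<And>k. k \<ge> 1 \<Longrightarrow> (\<integral>\<omega>. Z \<omega> ^ k \<partial>M) \<le> 2 * \<rho> * fact k * b ^ k"
    and EZ: "(\<integral>\<omega>. Z \<omega> \<partial>M) = \<mu>" and \<mu>: "0 \<le> \<mu>"
    and \<rho>: "0 \<le> \<rho>" and s: "0 \<le> s" and b: "0 \<le> b" and sb: "s * b \<le> 1/2"
  shows "(\<integral>\<^sup>+\<omega>. ennreal (exp (s * (Z \<omega> - \<mu>))) \<partial>M) \<le> ennreal (exp (4 * \<rho> * (s * b)\<^sup>2))"
proof -
  interpret prob_space M by (rule P)
  define q where "q = s * b"
  have q: "0 \<le> q" "q \<le> 1/2" using s b sb by (auto simp: q_def)
  define T where "T = (\<lambda>n \<omega>. (s * Z \<omega>) ^ (n+2) / fact (n+2))"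
  have T0: "0 \<le> T n \<omega>" if "\<omega> \<in> space M" for n \<omega>
    using Z0[OF that] s by (simp add: T_def)
  have pw: "ennreal (exp (s * (Z \<omega> - \<mu>))) =
      ennreal (exp (-(s*\<mu>))) * (ennreal (1 + s * Z \<omega>) + (\<Sum>n. ennreal (T n \<omega>)))"
    if \<omega>: "\<omega> \<in> space M" for \<omega>
  proof -
    have "(\<lambda>n. T n \<omega>) sums (exp (s * Z \<omega>) - 1 - s * Z \<omega>)"
      unfolding T_def by (rule exp_tail_sums)
    then have "(\<Sum>n. ennreal (T n \<omega>)) = ennreal (exp (s * Z \<omega>) - 1 - s * Z \<omega>)"
      by (rule suminf_ennreal_eq[rotated]) (use T0 \<omega> in auto)
    moreover have "0 \<le> exp (s * Z \<omega>) - 1 - s * Z \<omega>" using exp_ge_add_one_self[of "s * Z \<omega>"] by linarith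
    moreover have "0 \<le> 1 + s * Z \<omega>" using Z0[OF \<omega>] s by simp
    moreover have "exp (s * (Z \<omega> - \<mu>)) = exp (-(s*\<mu>)) * ((1 + s * Z \<omega>) + (exp (s * Z \<omega>) - 1 - s * Z \<omega>))"
      by (simp add: right_diff_distrib exp_diff exp_minus field_simps)
    ultimately show ?thesis by (simp add: ennreal_mult' ennreal_plus[symmetric] del: ennreal_plus)
  qed
  have Tm: "(\<lambda>\<omega>. ennreal (T n \<omega>)) \<in> borel_measurable M" for n
    unfolding T_def using Zm by measurable
  have lin: "(\<integral>\<^sup>+\<omega>. ennreal (1 + s * Z \<omega>) \<partial>M) = ennreal (1 + s * \<mu>)"
  proof -
    have "integrable M (\<lambda>\<omega>. 1 + s * Z \<omega>)" using ZI[of 1] by simp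
    then have "(\<integral>\<^sup>+\<omega>. ennreal (1 + s * Z \<omega>) \<partial>M) = ennreal (\<integral>\<omega>. 1 + s * Z \<omega> \<partial>M)"
      by (rule nn_integral_eq_integral) (use Z0 s in \<open>auto intro!: AE_I2\<close>)
    also have "(\<integral>\<omega>. 1 + s * Z \<omega> \<partial>M) = 1 + s * \<mu>"
      using ZI[of 1] EZ by (simp add: prob_space)
    finally show ?thesis .
  qed
  have termb: "(\<integral>\<^sup>+\<omega>. ennreal (T n \<omega>) \<partial>M) \<le> ennreal (2 * \<rho> * q\<^sup>2 * q ^ n)" for n
  proof -
    have "integrable M (\<lambda>\<omega>. T n \<omega>)" unfolding T_def power_mult_distrib
      using ZI[of "n+2"] by simp
    then have "(\<integral>\<^sup>+\<omega>. ennreal (T n \<omega>) \<partial>M) = ennreal (\<integral>\<omega>. T n \<omega> \<partial>M)"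
      by (rule nn_integral_eq_integral) (use T0 in \<open>auto intro!: AE_I2\<close>)
    also have "(\<integral>\<omega>. T n \<omega> \<partial>M) = s ^ (n+2) * (\<integral>\<omega>. Z \<omega> ^ (n+2) \<partial>M) / fact (n+2)"
      unfolding T_def power_mult_distrib by simp
    also have "\<dots> \<le> s ^ (n+2) * (2 * \<rho> * fact (n+2) * b ^ (n+2)) / fact (n+2)"
      using ZB[of "n+2"] s by (intro divide_right_mono mult_left_mono) auto
    also have "\<dots> = 2 * \<rho> * q\<^sup>2 * q ^ n"
      by (simp add: q_def power_mult_distrib power_add power2_eq_square)
    finally show ?thesis by (simp add: ennreal_leI)
  qed
  have geo: "(\<lambda>n. 2 * \<rho> * q\<^sup>2 * q ^ n) sums (2 * \<rho> * q\<^sup>2 * (1 / (1 - q)))"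
    by (rule sums_mult[OF geometric_sums]) (use q in auto)
  have "(\<integral>\<^sup>+\<omega>. ennreal (exp (s * (Z \<omega> - \<mu>))) \<partial>M) =
      (\<integral>\<^sup>+\<omega>. ennreal (exp (-(s*\<mu>))) * (ennreal (1 + s * Z \<omega>) + (\<Sum>n. ennreal (T n \<omega>))) \<partial>M)"
    by (rule nn_integral_cong) (use pw in auto)
  also have "\<dots> = ennreal (exp (-(s*\<mu>))) * ((\<integral>\<^sup>+\<omega>. ennreal (1 + s * Z \<omega>) \<partial>M) + (\<integral>\<^sup>+\<omega>. (\<Sum>n. ennreal (T n \<omega>)) \<partial>M))"
  proof -
    have m1: "(\<lambda>\<omega>. ennreal (1 + s * Z \<omega>)) \<in> borel_measurable M" using Zm by measurable
    have m2: "(\<lambda>\<omega>. (\<Sum>n. ennreal (T n \<omega>))) \<in> borel_measurable M" using Tm by measurable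
    show ?thesis
      using m1 m2 by (subst nn_integral_cmult) (auto simp: nn_integral_add)
  qed
  also have "(\<integral>\<^sup>+\<omega>. (\<Sum>n. ennreal (T n \<omega>)) \<partial>M) = (\<Sum>n. \<integral>\<^sup>+\<omega>. ennreal (T n \<omega>) \<partial>M)"
    by (rule nn_integral_suminf) (rule Tm)
  also have "\<dots> \<le> (\<Sum>n. ennreal (2 * \<rho> * q\<^sup>2 * q ^ n))"
    by (intro suminf_le termb) auto
  also have "\<dots> = ennreal (2 * \<rho> * q\<^sup>2 * (1 / (1 - q)))"
    by (rule suminf_ennreal_eq[OF _ geo]) (use \<rho> q in auto)
  finally have "(\<integral>\<^sup>+\<omega>. ennreal (exp (s * (Z \<omega> - \<mu>))) \<partial>M)
      \<le> ennreal (exp (-(s*\<mu>))) * (ennreal (1 + s * \<mu>) + ennreal (2 * \<rho> * q\<^sup>2 * (1 / (1 - q))))"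
    unfolding lin by (simp add: mult_left_mono add_left_mono)
  also have "\<dots> = ennreal (exp (-(s*\<mu>)) * (1 + s * \<mu> + 2 * \<rho> * q\<^sup>2 * (1 / (1 - q))))"
    using s \<mu> \<rho> q by (simp add: ennreal_mult' ennreal_plus[symmetric] del: ennreal_plus)
  also have "\<dots> \<le> ennreal (exp (4 * \<rho> * (s * b)\<^sup>2))"
  proof (rule ennreal_leI)
    have "1 / (1 - q) \<le> 2" using q by (simp add: divide_le_eq)
    then have "2 * \<rho> * q\<^sup>2 * (1 / (1 - q)) \<le> 2 * \<rho> * q\<^sup>2 * 2"
      using \<rho> by (intro mult_left_mono) auto
    then have "1 + s * \<mu> + 2 * \<rho> * q\<^sup>2 * (1 / (1 - q)) \<le> 1 + (s * \<mu> + 4 * \<rho> * q\<^sup>2)" by simp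
    also have "\<dots> \<le> exp (s * \<mu> + 4 * \<rho> * q\<^sup>2)" by (rule exp_ge_add_one_self)
    finally have "exp (-(s*\<mu>)) * (1 + s * \<mu> + 2 * \<rho> * q\<^sup>2 * (1 / (1 - q))) \<le> exp (-(s*\<mu>)) * exp (s * \<mu> + 4 * \<rho> * q\<^sup>2)"
      by (intro mult_left_mono) auto
    also have "\<dots> = exp (4 * \<rho> * (s * b)\<^sup>2)" by (simp add: q_def flip: exp_add)
    finally show "exp (-(s*\<mu>)) * (1 + s * \<mu> + 2 * \<rho> * q\<^sup>2 * (1 / (1 - q))) \<le> exp (4 * \<rho> * (s * b)\<^sup>2)" .
  qed
  finally show ?thesis .
qed


lemma mgf_lower:
  fixes M :: "'a measure" and Z :: "'a \<Rightarrow> real"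
  assumes P: "prob_space M" and Zm: "Z \<in> borel_measurable M"
    and Z0: "\<And>\<omega>. \<omega> \<in> space M \<Longrightarrow> 0 \<le> Z \<omega>"
    and ZI: "\<And>k. k \<ge> 1 \<Longrightarrow> integrable M (\<lambda>\<omega>. Z \<omega> ^ k)"
    and ZB: "\<And>k. k \<ge> 1 \<Longrightarrow> (\<integral>\<omega>. Z \<omega> ^ k \<partial>M) \<le> 2 * \<rho> * fact k * b ^ k"
    and EZ: "(\<integral>\<omega>. Z \<omega> \<partial>M) = \<mu>"
    and s: "0 \<le> s"
  shows "(\<integral>\<^sup>+\<omega>. ennreal (exp (-s * (Z \<omega> - \<mu>))) \<partial>M) \<le> ennreal (exp (2 * \<rho> * (s * b)\<^sup>2))"
proof -
  interpret prob_space M by (rule P)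
  define g where "g = (\<lambda>\<omega>. exp (s*\<mu>) * (1 - s * Z \<omega> + (s * Z \<omega>)\<^sup>2 / 2))"
  have g0: "0 \<le> g \<omega>" for \<omega>
  proof -
    have "0 \<le> 1 - s * Z \<omega> + (s * Z \<omega>)\<^sup>2 / 2"
      using sum_squares_ge_zero[of "s * Z \<omega> - 1" 1] by (simp add: power2_eq_square algebra_simps)
    then show ?thesis by (simp add: g_def)
  qed
  have le: "exp (-s * (Z \<omega> - \<mu>)) \<le> g \<omega>" if "\<omega> \<in> space M" for \<omega>
  proof -
    have "exp (-s * (Z \<omega> - \<mu>)) = exp (s*\<mu>) * exp (-(s * Z \<omega>))"
      by (simp add: algebra_simps flip: exp_add)
    also have "\<dots> \<le> g \<omega>" unfolding g_def
      using exp_neg_le_quad[of "s * Z \<omega>"] Z0[OF that] s by (intro mult_left_mono) auto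
    finally show ?thesis .
  qed
  have gI: "integrable M g" unfolding g_def power_mult_distrib
    using ZI[of 1] ZI[of 2] by simp
  have "(\<integral>\<^sup>+\<omega>. ennreal (exp (-s * (Z \<omega> - \<mu>))) \<partial>M) \<le> (\<integral>\<^sup>+\<omega>. ennreal (g \<omega>) \<partial>M)"
    by (rule nn_integral_mono) (use le in \<open>auto intro: ennreal_leI\<close>)
  also have "\<dots> = ennreal (\<integral>\<omega>. g \<omega> \<partial>M)"
    by (rule nn_integral_eq_integral[OF gI]) (use g0 in auto)
  also have "(\<integral>\<omega>. g \<omega> \<partial>M) = exp (s*\<mu>) * (1 - s * \<mu> + s\<^sup>2 * (\<integral>\<omega>. Z \<omega> ^ 2 \<partial>M) / 2)"
    unfolding g_def power_mult_distrib using ZI[of 1] ZI[of 2] EZ by (simp add: prob_space)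
  also have "\<dots> \<le> exp (s*\<mu>) * (1 + (- s * \<mu> + 2 * \<rho> * (s * b)\<^sup>2))"
  proof -
    have "(\<integral>\<omega>. Z \<omega> ^ 2 \<partial>M) \<le> 4 * \<rho> * b\<^sup>2" using ZB[of 2] by (simp add: numeral_2_eq_2)
    then have "s\<^sup>2 * (\<integral>\<omega>. Z \<omega> ^ 2 \<partial>M) \<le> s\<^sup>2 * (4 * \<rho> * b\<^sup>2)" by (intro mult_left_mono) auto
    then show ?thesis by (intro mult_left_mono) (auto simp: power_mult_distrib mult_ac)
  qed
  also have "\<dots> \<le> exp (s*\<mu>) * exp (- s * \<mu> + 2 * \<rho> * (s * b)\<^sup>2)"
    by (intro mult_left_mono exp_ge_add_one_self) auto
  also have "\<dots> = exp (2 * \<rho> * (s * b)\<^sup>2)" by (simp flip: exp_add)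
  finally show ?thesis by (simp add: ennreal_leI)
qed




lemma chernoff_sum:
  fixes M :: "'a measure" and W :: "'i \<Rightarrow> 'a \<Rightarrow> real"
  assumes P: "prob_space M" and fin: "finite I"
    and ind: "prob_space.indep_vars M (\<lambda>_. borel) W I"
    and s: "0 < s" and B: "0 \<le> B"
    and mgf: "\<And>i. i \<in> I \<Longrightarrow> (\<integral>\<^sup>+\<omega>. ennreal (exp (s * W i \<omega>)) \<partial>M) \<le> ennreal B"
  shows "measure M {\<omega>\<in>space M. a \<le> (\<Sum>i\<in>I. W i \<omega>)} \<le> exp (-s * a) * B ^ card I"
proof -
  interpret prob_space M by (rule P)
  have Wm: "\<And>i. i \<in> I \<Longrightarrow> W i \<in> borel_measurable M"
    using ind by (auto simp: indep_vars_def)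
  have Sm: "(\<lambda>\<omega>. (\<Sum>i\<in>I. W i \<omega>)) \<in> borel_measurable M"
    using Wm by (intro borel_measurable_sum) auto
  have "ennreal (measure M {\<omega>\<in>space M. a \<le> (\<Sum>i\<in>I. W i \<omega>)}) = emeasure M {\<omega>\<in>space M. a \<le> (\<Sum>i\<in>I. W i \<omega>)}"
    by (simp add: emeasure_eq_measure)
  also have "\<dots> \<le> ennreal (exp (-s*a)) * (\<integral>\<^sup>+\<omega>\<in>space M. ennreal (exp (s * (\<Sum>i\<in>I. W i \<omega>))) \<partial>M)"
    by (intro Chernoff_ineq_nn_integral_ge s) (use Sm in auto)
  also have "(\<integral>\<^sup>+\<omega>\<in>space M. ennreal (exp (s * (\<Sum>i\<in>I. W i \<omega>))) \<partial>M) =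
             (\<integral>\<^sup>+\<omega>. (\<Prod>i\<in>I. ennreal (exp (s * W i \<omega>))) \<partial>M)"
    by (intro nn_integral_cong)
       (simp_all add: sum_distrib_left exp_sum fin prod_ennreal)
  also have "\<dots> = (\<Prod>i\<in>I. \<integral>\<^sup>+\<omega>. ennreal (exp (s * W i \<omega>)) \<partial>M)"
    by (intro indep_vars_nn_integral fin indep_vars_compose2[OF ind]) auto
  also have "ennreal (exp (-s*a)) * \<dots> \<le> ennreal (exp (-s*a)) * (\<Prod>i\<in>I. ennreal B)"
    by (intro mult_left_mono prod_mono_ennreal mgf) auto
  also have "\<dots> = ennreal (exp (-s*a) * B ^ card I)"
    using B by (simp add: prod_ennreal ennreal_mult' ennreal_power)
  finally show ?thesis by (subst (asm) ennreal_le_iff) (use B in auto)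
qed




lemma joint_indep_sets:
  fixes M :: "'a measure" and U :: "'i \<Rightarrow> 'a \<Rightarrow> real" and V :: "'k \<Rightarrow> 'a \<Rightarrow> real"
  assumes P: "prob_space M"
    and iU: "prob_space.indep_vars M (\<lambda>_. borel) U I1"
    and iV: "prob_space.indep_vars M (\<lambda>_. borel) V I2"
    and joint: "\<And>Ja Jb BU BV. finite Ja \<Longrightarrow> Ja \<subseteq> I1 \<Longrightarrow> finite Jb \<Longrightarrow> Jb \<subseteq> I2 \<Longrightarrow>
        (\<And>i. i \<in> Ja \<Longrightarrow> BU i \<in> sets borel) \<Longrightarrow> (\<And>k. k \<in> Jb \<Longrightarrow> BV k \<in> sets borel) \<Longrightarrow>
        measure M ({\<omega>\<in>space M. \<forall>i\<in>Ja. U i \<omega> \<in> BU i} \<inter> {\<omega>\<in>space M. \<forall>k\<in>Jb. V k \<omega> \<in> BV k}) =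
        measure M {\<omega>\<in>space M. \<forall>i\<in>Ja. U i \<omega> \<in> BU i} * measure M {\<omega>\<in>space M. \<forall>k\<in>Jb. V k \<omega> \<in> BV k}"
  shows "prob_space.indep_sets M
     (\<lambda>x. case x of Inl i \<Rightarrow> {U i -` A \<inter> space M | A. A \<in> sets borel}
                  | Inr k \<Rightarrow> {V k -` A \<inter> space M | A. A \<in> sets borel})
     (Inl ` I1 \<union> Inr ` I2)"
proof -
  interpret prob_space M by (rule P)
  have Um: "\<And>i. i \<in> I1 \<Longrightarrow> U i \<in> borel_measurable M" using iU by (auto simp: indep_vars_def)
  have Vm: "\<And>i. i \<in> I2 \<Longrightarrow> V i \<in> borel_measurable M" using iV by (auto simp: indep_vars_def)
  let ?E = "(\<lambda>x. case x of Inl i \<Rightarrow> {U i -` A \<inter> space M | A. A \<in> sets borel}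
                  | Inr k \<Rightarrow> {V k -` A \<inter> space M | A. A \<in> sets borel})"
  show ?thesis
  proof (rule indep_setsI)
    fix x assume "x \<in> Inl ` I1 \<union> Inr ` I2"
    then show "?E x \<subseteq> events"
      using Um Vm by (auto simp: measurable_sets)
  next
    fix A J assume J: "J \<noteq> {}" "J \<subseteq> Inl ` I1 \<union> Inr ` I2" "finite J"
      and A: "\<forall>j\<in>J. A j \<in> ?E j"
    define Ja where "Ja = Inl -` J"
    define Jb where "Jb = Inr -` J"
    have fJa: "finite Ja" unfolding Ja_def using J(3) by (rule finite_vimageI) (simp add: inj_on_def)
    have fJb: "finite Jb" unfolding Jb_def using J(3) by (rule finite_vimageI) (simp add: inj_on_def)
    have Ja1: "Ja \<subseteq> I1" using J(2) by (auto simp: Ja_def)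
    have Jb2: "Jb \<subseteq> I2" using J(2) by (auto simp: Jb_def)
    have Jeq: "J = Inl ` Ja \<union> Inr ` Jb"
      by (auto simp: Ja_def Jb_def image_iff) (metis sum.exhaust)
    have "\<forall>i\<in>Ja. \<exists>B. B \<in> sets borel \<and> A (Inl i) = U i -` B \<inter> space M"
    proof
      fix i assume "i \<in> Ja"
      then have "A (Inl i) \<in> ?E (Inl i)" using A by (auto simp: Ja_def)
      then show "\<exists>B. B \<in> sets borel \<and> A (Inl i) = U i -` B \<inter> space M" by auto
    qed
    then obtain BU where BU: "\<And>i. i \<in> Ja \<Longrightarrow> BU i \<in> sets borel \<and> A (Inl i) = U i -` BU i \<inter> space M"
      by metis
    have "\<forall>k\<in>Jb. \<exists>B. B \<in> sets borel \<and> A (Inr k) = V k -` B \<inter> space M"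
    proof
      fix i assume "i \<in> Jb"
      then have "A (Inr i) \<in> ?E (Inr i)" using A by (auto simp: Jb_def)
      then show "\<exists>B. B \<in> sets borel \<and> A (Inr i) = V i -` B \<inter> space M" by auto
    qed
    then obtain BV where BV: "\<And>k. k \<in> Jb \<Longrightarrow> BV k \<in> sets borel \<and> A (Inr k) = V k -` BV k \<inter> space M"
      by metis
    define GU where "GU = {\<omega>\<in>space M. \<forall>i\<in>Ja. U i \<omega> \<in> BU i}"
    define GV where "GV = {\<omega>\<in>space M. \<forall>k\<in>Jb. V k \<omega> \<in> BV k}"
    have pU: "prob GU = (\<Prod>i\<in>Ja. prob (A (Inl i)))"
    proof (cases "Ja = {}")
      case True then show ?thesis by (simp add: GU_def prob_space)
    next
      case False
      have "GU = (\<Inter>i\<in>Ja. U i -` BU i \<inter> space M)" using False by (auto simp: GU_def)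
      then have "prob GU = (\<Prod>i\<in>Ja. prob (U i -` BU i \<inter> space M))"
        using indep_varsD[OF iU False fJa Ja1, of BU] BU by simp
      then show ?thesis using BU by simp
    qed
    have pV: "prob GV = (\<Prod>k\<in>Jb. prob (A (Inr k)))"
    proof (cases "Jb = {}")
      case True then show ?thesis by (simp add: GV_def prob_space)
    next
      case False
      have "GV = (\<Inter>k\<in>Jb. V k -` BV k \<inter> space M)" using False by (auto simp: GV_def)
      then have "prob GV = (\<Prod>k\<in>Jb. prob (V k -` BV k \<inter> space M))"
        using indep_varsD[OF iV False fJb Jb2, of BV] BV by simp
      then show ?thesis using BV by simp
    qed
    have inter: "(\<Inter>j\<in>J. A j) = GU \<inter> GV"
    proof -
      have sub: "A j \<subseteq> space M" if "j \<in> J" for j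
      proof (cases j)
        case (Inl i)
        then have "A j \<in> ?E (Inl i)" using A that by auto
        then show ?thesis using Inl by auto
      next
        case (Inr i)
        then have "A j \<in> ?E (Inr i)" using A that by auto
        then show ?thesis using Inr by auto
      qed
      have "(\<Inter>j\<in>J. A j) = (\<Inter>j\<in>J. A j) \<inter> space M" using J(1) sub by blast
      also have "\<dots> = GU \<inter> GV"
      proof -
        have AU: "\<And>i. i \<in> Ja \<Longrightarrow> A (Inl i) = U i -` BU i \<inter> space M" using BU by blast
        have AV: "\<And>i. i \<in> Jb \<Longrightarrow> A (Inr i) = V i -` BV i \<inter> space M" using BV by blast
        show ?thesis unfolding Jeq GU_def GV_def by (auto simp: AU AV) (metis AU AV Un_iff image_eqI IntE vimageE)+
      qed
      finally show ?thesis .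
    qed
    have "prob (\<Inter>j\<in>J. A j) = prob GU * prob GV"
      unfolding inter GU_def GV_def using joint[OF fJa Ja1 fJb Jb2, of BU BV] BU BV by auto
    also have "\<dots> = (\<Prod>j\<in>J. prob (A j))"
    proof -
      have "(\<Prod>j\<in>J. prob (A j)) = (\<Prod>j\<in>Inl ` Ja. prob (A j)) * (\<Prod>j\<in>Inr ` Jb. prob (A j))"
        unfolding Jeq using fJa fJb by (intro prod.union_disjoint) auto
      also have "\<dots> = (\<Prod>i\<in>Ja. prob (A (Inl i))) * (\<Prod>k\<in>Jb. prob (A (Inr k)))"
        by (simp add: prod.reindex inj_on_def)
      finally show ?thesis using pU pV by simp
    qed
    finally show "prob (\<Inter>j\<in>J. A j) = (\<Prod>j\<in>J. prob (A j))" .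
  qed
qed




lemma indep_vars_pairs:
  fixes M :: "'a measure" and U :: "'i \<Rightarrow> 'a \<Rightarrow> real" and V :: "'k \<Rightarrow> 'a \<Rightarrow> real"
  assumes P: "prob_space M"
    and ind: "prob_space.indep_sets M
     (\<lambda>x. case x of Inl i \<Rightarrow> {U i -` A \<inter> space M | A. A \<in> sets borel}
                  | Inr k \<Rightarrow> {V k -` A \<inter> space M | A. A \<in> sets borel})
     (Inl ` I1 \<union> Inr ` I2)"
    and Um: "\<And>i. i \<in> I \<Longrightarrow> U i \<in> borel_measurable M"
    and Vm: "\<And>i. i \<in> I \<Longrightarrow> V (h i) \<in> borel_measurable M"
    and I1: "I \<subseteq> I1" and I2: "h ` I \<subseteq> I2" and hinj: "inj_on h I"
  shows "prob_space.indep_vars M (\<lambda>_. borel) (\<lambda>i \<omega>. (V (h i) \<omega> * U i \<omega> / c)\<^sup>2) I"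
proof -
  interpret prob_space M by (rule P)
  let ?E = "(\<lambda>x. case x of Inl i \<Rightarrow> {U i -` A \<inter> space M | A. A \<in> sets borel}
                  | Inr k \<Rightarrow> {V k -` A \<inter> space M | A. A \<in> sets borel})"
  let ?K = "\<lambda>i. {Inl i, Inr (h i)}"
  have ind2: "indep_sets ?E (\<Union>i\<in>I. ?K i)"
    by (rule indep_sets_mono_index[OF _ ind]) (use I1 I2 in auto)
  have coll: "indep_sets (\<lambda>i. sigma_sets (space M) (\<Union>x\<in>?K i. ?E x)) I"
  proof (rule indep_sets_collect_sigma[OF ind2])
    fix x i assume "i \<in> I" "x \<in> ?K i"
    show "Int_stable (?E x)"
    proof (cases x)
      case (Inl a)
      show ?thesis unfolding Inl Int_stable_def
      proof (clarsimp)
        fix A B :: "real set" assume "A \<in> sets borel" "B \<in> sets borel"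
        then show "\<exists>C. U a -` A \<inter> space M \<inter> (U a -` B \<inter> space M) = U a -` C \<inter> space M \<and> C \<in> sets borel"
          by (intro exI[of _ "A \<inter> B"]) auto
      qed
    next
      case (Inr a)
      show ?thesis unfolding Inr Int_stable_def
      proof (clarsimp)
        fix A B :: "real set" assume "A \<in> sets borel" "B \<in> sets borel"
        then show "\<exists>C. V a -` A \<inter> space M \<inter> (V a -` B \<inter> space M) = V a -` C \<inter> space M \<and> C \<in> sets borel"
          by (intro exI[of _ "A \<inter> B"]) auto
      qed
    qed
  next
    show "disjoint_family_on ?K I"
      using hinj by (auto simp: disjoint_family_on_def inj_on_def)
  qed
  define Z where "Z = (\<lambda>i \<omega>. (V (h i) \<omega> * U i \<omega> / c)\<^sup>2)"
  have Zm: "Z i \<in> borel_measurable M" if "i \<in> I" for i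
    unfolding Z_def using Um[OF that] Vm[OF that] by measurable
  have sub: "{Z i -` A \<inter> space M | A. A \<in> sets borel} \<subseteq> sigma_sets (space M) (\<Union>x\<in>?K i. ?E x)"
    if i: "i \<in> I" for i
  proof -
    let ?G = "(\<Union>x\<in>?K i. ?E x)"
    have G: "?G \<subseteq> Pow (space M)" by auto
    define N where "N = sigma (space M) ?G"
    have sN: "sets N = sigma_sets (space M) ?G" unfolding N_def using G by (rule sets_measure_of)
    have spN: "space N = space M" unfolding N_def using G by (rule space_measure_of)
    have UN: "U i \<in> borel_measurable N"
    proof (rule measurableI)
      fix A :: "real set" assume "A \<in> sets borel"
      then have "U i -` A \<inter> space M \<in> ?G" by auto
      then show "U i -` A \<inter> space N \<in> sets N" unfolding sN spN by auto
    qed auto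
    have VN: "V (h i) \<in> borel_measurable N"
    proof (rule measurableI)
      fix A :: "real set" assume "A \<in> sets borel"
      then have "V (h i) -` A \<inter> space M \<in> ?G" by auto
      then show "V (h i) -` A \<inter> space N \<in> sets N" unfolding sN spN by auto
    qed auto
    have ZN: "Z i \<in> borel_measurable N" unfolding Z_def using UN VN by measurable
    show ?thesis
    proof
      fix S assume "S \<in> {Z i -` A \<inter> space M | A. A \<in> sets borel}"
      then obtain A where A: "A \<in> sets borel" "S = Z i -` A \<inter> space M" by auto
      have "Z i -` A \<inter> space N \<in> sets N" using measurable_sets[OF ZN A(1)] .
      then show "S \<in> sigma_sets (space M) ?G" using A(2) sN spN by simp
    qed
  qed
  have "indep_vars (\<lambda>_. borel) Z I"
    unfolding indep_vars_def2
  proof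
    show "\<forall>i\<in>I. random_variable borel (Z i)" using Zm by auto
    show "indep_sets (\<lambda>i. {Z i -` A \<inter> space M | A. A \<in> sets borel}) I"
      by (rule indep_sets_mono_sets[OF coll sub])
  qed
  then show ?thesis by (simp add: Z_def)
qed




lemma col_tail:
  fixes M :: "'a measure" and X R :: "'a \<Rightarrow> nat \<Rightarrow> nat \<Rightarrow> real"
  assumes P: "prob_space M" and n: "n \<ge> 1"
    and Zind: "prob_space.indep_vars M (\<lambda>_. borel) (\<lambda>i \<omega>. (R \<omega> i j * X \<omega> i j / \<rho>)\<^sup>2) {..<n}"
    and Xm: "\<And>i. i < n \<Longrightarrow> (\<lambda>\<omega>. X \<omega> i j) \<in> borel_measurable M"
    and Rm: "\<And>i. i < n \<Longrightarrow> (\<lambda>\<omega>. R \<omega> i j) \<in> borel_measurable M"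
    and XR: "\<And>i. i < n \<Longrightarrow> prob_space.indep_var M borel (\<lambda>\<omega>. R \<omega> i j) borel (\<lambda>\<omega>. X \<omega> i j)"
    and R01: "\<And>i \<omega>. i < n \<Longrightarrow> \<omega> \<in> space M \<Longrightarrow> R \<omega> i j \<in> {0,1}"
    and Rp: "\<And>i. i < n \<Longrightarrow> measure M {\<omega>\<in>space M. R \<omega> i j = 1} = \<rho>"
    and momI: "\<And>i k. i < n \<Longrightarrow> k \<ge> 1 \<Longrightarrow> integrable M (\<lambda>\<omega>. X \<omega> i j ^ (2*k))"
    and momB: "\<And>i k. i < n \<Longrightarrow> k \<ge> 1 \<Longrightarrow> (\<integral>\<omega>. X \<omega> i j ^ (2*k) \<partial>M) \<le> 2 * fact k * a ^ k"
    and cov: "\<And>i. i < n \<Longrightarrow> (\<integral>\<omega>. X \<omega> i j ^ 2 \<partial>M) = c"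
    and r: "0 < r" "r \<le> \<rho>" "\<rho> \<le> 1" and a: "0 < a" and w: "0 < w"
    and wr: "w * r / (8 * a) \<le> 1/2"
  shows "measure M {\<omega>\<in>space M. w < \<bar>(1 - \<rho>) * ((1 / real n) * (\<Sum>i<n. (R \<omega> i j * X \<omega> i j / \<rho>)\<^sup>2))
                 - (1 / \<rho> - 1) * c\<bar>}
         \<le> 2 * exp (- (real n * w\<^sup>2 * r ^ 3 / (16 * a\<^sup>2)))"
proof -
  interpret prob_space M by (rule P)
  have \<rho>: "0 < \<rho>" using r by simp
  define Z where "Z = (\<lambda>i \<omega>. (R \<omega> i j * X \<omega> i j / \<rho>)\<^sup>2)"
  define b where "b = a / \<rho>\<^sup>2"
  define \<mu> where "\<mu> = c / \<rho>"
  have b0: "0 \<le> b" using a by (simp add: b_def)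
  have c0: "0 \<le> c"
  proof -
    have "0 \<le> (\<integral>\<omega>. X \<omega> 0 j ^ 2 \<partial>M)" by (rule integral_nonneg_AE) auto
    then show ?thesis using cov[of 0] n by simp
  qed
  have \<mu>0: "0 \<le> \<mu>" using c0 \<rho> by (simp add: \<mu>_def)
  have Zm: "\<And>i. i < n \<Longrightarrow> Z i \<in> borel_measurable M"
    unfolding Z_def using Xm Rm by measurable
  have Z0: "\<And>i \<omega>. 0 \<le> Z i \<omega>" by (simp add: Z_def)
  have ZI: "\<And>i k. i < n \<Longrightarrow> k \<ge> 1 \<Longrightarrow> integrable M (\<lambda>\<omega>. Z i \<omega> ^ k)"
    unfolding Z_def by (rule Z_moment_eq(1)[OF P Rm Xm XR R01 Rp \<rho> _ momI]) auto
  have ZB: "\<And>i k. i < n \<Longrightarrow> k \<ge> 1 \<Longrightarrow> (\<integral>\<omega>. Z i \<omega> ^ k \<partial>M) \<le> 2 * \<rho> * fact k * b ^ k"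
  proof -
    fix i k :: nat assume i: "i < n" and k: "k \<ge> 1"
    have "(\<integral>\<omega>. Z i \<omega> ^ k \<partial>M) = \<rho> * (\<integral>\<omega>. X \<omega> i j ^ (2*k) \<partial>M) / \<rho> ^ (2*k)"
      unfolding Z_def by (rule Z_moment_eq(2)[OF P Rm Xm XR R01 Rp \<rho> k momI]) (use i k in auto)
    also have "\<dots> \<le> \<rho> * (2 * fact k * a ^ k) / \<rho> ^ (2*k)"
      using momB[OF i k] \<rho> by (intro divide_right_mono mult_left_mono) auto
    also have "\<dots> = 2 * \<rho> * fact k * b ^ k"
      by (simp add: b_def power_divide power_mult)
    finally show "(\<integral>\<omega>. Z i \<omega> ^ k \<partial>M) \<le> 2 * \<rho> * fact k * b ^ k" .
  qed
  have EZ: "\<And>i. i < n \<Longrightarrow> (\<integral>\<omega>. Z i \<omega> \<partial>M) = \<mu>"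
  proof -
    fix i assume i: "i < n"
    have "(\<integral>\<omega>. Z i \<omega> ^ 1 \<partial>M) = \<rho> * (\<integral>\<omega>. X \<omega> i j ^ (2*1) \<partial>M) / \<rho> ^ (2*1)"
      unfolding Z_def by (rule Z_moment_eq(2)[OF P Rm Xm XR R01 Rp \<rho> _ momI]) (use i in auto)
    then show "(\<integral>\<omega>. Z i \<omega> \<partial>M) = \<mu>" using cov[OF i] \<rho> by (simp add: \<mu>_def power2_eq_square)
  qed
  define Kr where "Kr = 4 * a\<^sup>2 / r ^ 3"
  define s where "s = w * r ^ 3 / (8 * a\<^sup>2)"
  have s0: "0 < s" using w r a by (simp add: s_def)
  have sb: "s * b \<le> 1/2"
  proof -
    have "b \<le> a / r\<^sup>2" unfolding b_def using a r by (intro divide_left_mono power_mono mult_pos_pos) auto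
    then have "s * b \<le> s * (a / r\<^sup>2)" using s0 by (intro mult_left_mono) auto
    also have "s * (a / r\<^sup>2) = w * r / (8 * a)" using a r by (simp add: s_def power2_eq_square power3_eq_cube field_simps)
    finally show ?thesis using wr by linarith
  qed
  have K: "4 * \<rho> * (s * b)\<^sup>2 \<le> Kr * s\<^sup>2"
  proof -
    have "4 * \<rho> * (s * b)\<^sup>2 = (4 * a\<^sup>2 / \<rho> ^ 3) * s\<^sup>2" using \<rho>
      by (simp add: b_def power2_eq_square power3_eq_cube field_simps)
    also have "\<dots> \<le> Kr * s\<^sup>2" unfolding Kr_def using a r
      by (intro mult_right_mono divide_left_mono power_mono mult_pos_pos) auto
    finally show ?thesis .
  qed
  have up: "(\<integral>\<^sup>+\<omega>. ennreal (exp (s * (Z i \<omega> - \<mu>))) \<partial>M) \<le> ennreal (exp (Kr * s\<^sup>2))" if "i < n" for i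
  proof -
    have "(\<integral>\<^sup>+\<omega>. ennreal (exp (s * (Z i \<omega> - \<mu>))) \<partial>M) \<le> ennreal (exp (4 * \<rho> * (s * b)\<^sup>2))"
      by (rule mgf_upper[OF P Zm[OF that] _ ZI[OF that] ZB[OF that] EZ[OF that] \<mu>0])
         (use Z0 \<rho> s0 b0 sb in auto)
    also have "\<dots> \<le> ennreal (exp (Kr * s\<^sup>2))" using K by (intro ennreal_leI) simp
    finally show ?thesis .
  qed
  have lo: "(\<integral>\<^sup>+\<omega>. ennreal (exp (s * (- (Z i \<omega> - \<mu>)))) \<partial>M) \<le> ennreal (exp (Kr * s\<^sup>2))" if "i < n" for i
  proof -
    have "(\<integral>\<^sup>+\<omega>. ennreal (exp (-s * (Z i \<omega> - \<mu>))) \<partial>M) \<le> ennreal (exp (2 * \<rho> * (s * b)\<^sup>2))"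
      by (rule mgf_lower[OF P Zm[OF that] _ ZI[OF that] ZB[OF that] EZ[OF that]])
         (use Z0 s0 in auto)
    also have "\<dots> \<le> ennreal (exp (Kr * s\<^sup>2))"
    proof (intro ennreal_leI iffD2[OF exp_le_cancel_iff])
      have "0 \<le> \<rho> * (s * b)\<^sup>2" using \<rho> by simp
      then show "2 * \<rho> * (s * b)\<^sup>2 \<le> Kr * s\<^sup>2" using K by linarith
    qed
    finally show ?thesis by (simp add: algebra_simps)
  qed
  have indZ: "indep_vars (\<lambda>_. borel) Z {..<n}" using Zind by (simp add: Z_def)
  have indW: "indep_vars (\<lambda>_. borel) (\<lambda>i \<omega>. Z i \<omega> - \<mu>) {..<n}"
    by (rule indep_vars_compose2[OF indZ, of "\<lambda>_ z. z - \<mu>"]) auto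
  have indW': "indep_vars (\<lambda>_. borel) (\<lambda>i \<omega>. - (Z i \<omega> - \<mu>)) {..<n}"
    by (rule indep_vars_compose2[OF indZ, of "\<lambda>_ z. - (z - \<mu>)"]) auto
  have bound: "exp (-s * (real n * w)) * exp (Kr * s\<^sup>2) ^ n \<le> exp (- (real n * w\<^sup>2 * r ^ 3 / (16 * a\<^sup>2)))"
  proof -
    have "exp (-s * (real n * w)) * exp (Kr * s\<^sup>2) ^ n = exp (real n * (Kr * s\<^sup>2 - s * w))"
      by (simp add: exp_of_nat_mult[symmetric] algebra_simps flip: exp_add)
    also have "Kr * s\<^sup>2 - s * w = - (w\<^sup>2 * r ^ 3 / (16 * a\<^sup>2))"
      using a r by (simp add: Kr_def s_def power2_eq_square power3_eq_cube field_simps)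
    finally show ?thesis by simp
  qed
  have p1: "measure M {\<omega>\<in>space M. real n * w \<le> (\<Sum>i<n. Z i \<omega> - \<mu>)} \<le> exp (- (real n * w\<^sup>2 * r ^ 3 / (16 * a\<^sup>2)))"
    using chernoff_sum[OF P _ indW s0 _ up, of "real n * w"] bound by simp
  have p2: "measure M {\<omega>\<in>space M. real n * w \<le> (\<Sum>i<n. - (Z i \<omega> - \<mu>))} \<le> exp (- (real n * w\<^sup>2 * r ^ 3 / (16 * a\<^sup>2)))"
    using chernoff_sum[OF P _ indW' s0 _ lo, of "real n * w"] bound by simp
  have sub: "{\<omega>\<in>space M. w < \<bar>(1 - \<rho>) * ((1 / real n) * (\<Sum>i<n. (R \<omega> i j * X \<omega> i j / \<rho>)\<^sup>2)) - (1 / \<rho> - 1) * c\<bar>}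
      \<subseteq> {\<omega>\<in>space M. real n * w \<le> (\<Sum>i<n. Z i \<omega> - \<mu>)} \<union> {\<omega>\<in>space M. real n * w \<le> (\<Sum>i<n. - (Z i \<omega> - \<mu>))}"
  proof safe
    fix \<omega> assume \<omega>: "\<omega> \<in> space M"
      and big: "w < \<bar>(1 - \<rho>) * ((1 / real n) * (\<Sum>i<n. (R \<omega> i j * X \<omega> i j / \<rho>)\<^sup>2)) - (1 / \<rho> - 1) * c\<bar>"
      and no: "\<not> real n * w \<le> (\<Sum>i<n. - (Z i \<omega> - \<mu>))"
    define S where "S = (\<Sum>i<n. Z i \<omega>)"
    have nn: "real n > 0" using n by simp
    have eqY: "(1 - \<rho>) * ((1 / real n) * (\<Sum>i<n. (R \<omega> i j * X \<omega> i j / \<rho>)\<^sup>2)) - (1 / \<rho> - 1) * c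
        = (1 - \<rho>) * ((S - real n * \<mu>) / real n)"
      using \<rho> nn by (simp add: S_def Z_def \<mu>_def field_simps)
    have "\<bar>(1 - \<rho>) * ((S - real n * \<mu>) / real n)\<bar> \<le> \<bar>(S - real n * \<mu>) / real n\<bar>"
    proof -
      have "\<bar>1 - \<rho>\<bar> \<le> 1" using r by simp
      then have "\<bar>1 - \<rho>\<bar> * \<bar>(S - real n * \<mu>) / real n\<bar> \<le> 1 * \<bar>(S - real n * \<mu>) / real n\<bar>"
        by (intro mult_right_mono) auto
      then show ?thesis by (simp add: abs_mult)
    qed
    then have "w < \<bar>S - real n * \<mu>\<bar> / real n" using big eqY by simp
    then have "real n * w < \<bar>S - real n * \<mu>\<bar>" using nn by (simp add: field_simps)
    moreover have "(\<Sum>i<n. Z i \<omega> - \<mu>) = S - real n * \<mu>" by (simp add: S_def sum_subtractf)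
    moreover have "(\<Sum>i<n. - (Z i \<omega> - \<mu>)) = - (S - real n * \<mu>)" by (simp add: S_def sum_subtractf sum_negf)
    ultimately show "real n * w \<le> (\<Sum>i<n. Z i \<omega> - \<mu>)" using no by auto
  qed
  have Sm1: "(\<lambda>\<omega>. (\<Sum>i<n. Z i \<omega> - \<mu>)) \<in> borel_measurable M"
    using Zm by (intro borel_measurable_sum) auto
  have Sm2: "(\<lambda>\<omega>. (\<Sum>i<n. - (Z i \<omega> - \<mu>))) \<in> borel_measurable M"
    using Zm by (intro borel_measurable_sum) auto
  have ev1: "{\<omega>\<in>space M. real n * w \<le> (\<Sum>i<n. Z i \<omega> - \<mu>)} \<in> events" using Sm1 by measurable
  have ev2: "{\<omega>\<in>space M. real n * w \<le> (\<Sum>i<n. - (Z i \<omega> - \<mu>))} \<in> events" using Sm2 by measurable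
  have "measure M {\<omega>\<in>space M. w < \<bar>(1 - \<rho>) * ((1 / real n) * (\<Sum>i<n. (R \<omega> i j * X \<omega> i j / \<rho>)\<^sup>2)) - (1 / \<rho> - 1) * c\<bar>}
      \<le> measure M ({\<omega>\<in>space M. real n * w \<le> (\<Sum>i<n. Z i \<omega> - \<mu>)} \<union> {\<omega>\<in>space M. real n * w \<le> (\<Sum>i<n. - (Z i \<omega> - \<mu>))})"
    by (rule finite_measure_mono[OF sub]) (use ev1 ev2 in auto)
  also have "\<dots> \<le> measure M {\<omega>\<in>space M. real n * w \<le> (\<Sum>i<n. Z i \<omega> - \<mu>)} + measure M {\<omega>\<in>space M. real n * w \<le> (\<Sum>i<n. - (Z i \<omega> - \<mu>))}"
    by (rule measure_Un_le) (use ev1 ev2 in auto)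
  also have "\<dots> \<le> 2 * exp (- (real n * w\<^sup>2 * r ^ 3 / (16 * a\<^sup>2)))" using p1 p2 by simp
  finally show ?thesis .
qed




lemma indep_var_swap:
  assumes P: "prob_space M" and "prob_space.indep_var M Ma A Mb B"
  shows "prob_space.indep_var M Mb B Ma A"
proof -
  interpret prob_space M by (rule P)
  show ?thesis using assms(2) unfolding indep_var_eq indep_sets2_eq
    apply (elim conjE)
    apply (intro conjI ballI)
        apply assumption+
    apply (subst Int_commute, subst mult.commute)
    apply blast
    done
qed

lemma col_facts:
  fixes M :: "'a measure" and X R :: "'a \<Rightarrow> nat \<Rightarrow> nat \<Rightarrow> real"
  assumes P: "prob_space M"
    and rows_indep: "prob_space.indep_vars M (\<lambda>_. PiM {..<p} (\<lambda>_. borel))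
                 (\<lambda>i \<omega>. restrict (\<lambda>j. X \<omega> i j) {..<p}) {..<n}"
    and R_indep: "prob_space.indep_vars M (\<lambda>_. borel)
                 (\<lambda>(i, j) \<omega>. R \<omega> i j) ({..<n} \<times> {..<p})"
    and XR_indep: "prob_space.indep_var M
          (PiM ({..<n} \<times> {..<p}) (\<lambda>_. borel)) (\<lambda>\<omega>. restrict (\<lambda>(i, j). X \<omega> i j) ({..<n} \<times> {..<p}))
          (PiM ({..<n} \<times> {..<p}) (\<lambda>_. borel)) (\<lambda>\<omega>. restrict (\<lambda>(i, j). R \<omega> i j) ({..<n} \<times> {..<p}))"
    and j: "j < p"
  shows "prob_space.indep_vars M (\<lambda>_. borel) (\<lambda>i \<omega>. (R \<omega> i j * X \<omega> i j / c)\<^sup>2) {..<n}"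
    and "\<And>i. i < n \<Longrightarrow> (\<lambda>\<omega>. X \<omega> i j) \<in> borel_measurable M"
    and "\<And>i. i < n \<Longrightarrow> (\<lambda>\<omega>. R \<omega> i j) \<in> borel_measurable M"
    and "\<And>i. i < n \<Longrightarrow> prob_space.indep_var M borel (\<lambda>\<omega>. R \<omega> i j) borel (\<lambda>\<omega>. X \<omega> i j)"
proof -
  interpret prob_space M by (rule P)
  define K where "K = {..<n} \<times> {..<p}"
  define U where "U = (\<lambda>i \<omega>. X \<omega> i j)"
  define V where "V = (\<lambda>k \<omega>. R \<omega> (fst k) (snd k))"
  have iU: "indep_vars (\<lambda>_. borel) U {..<n}"
  proof -
    have "indep_vars (\<lambda>_. borel) (\<lambda>i \<omega>. (\<lambda>m. m j) (restrict (\<lambda>j. X \<omega> i j) {..<p})) {..<n}"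
      by (rule indep_vars_compose2[OF rows_indep]) (use j in auto)
    then show ?thesis using j by (simp add: U_def)
  qed
  have iV: "indep_vars (\<lambda>_. borel) V K"
  proof -
    have "(\<lambda>(i, j) \<omega>. R \<omega> i j) = V" by (auto simp: V_def fun_eq_iff)
    then show ?thesis using R_indep by (simp add: K_def)
  qed
  have Um: "\<And>i. i < n \<Longrightarrow> U i \<in> borel_measurable M" using iU unfolding indep_vars_def2 by blast
  have Vm: "\<And>k. k \<in> K \<Longrightarrow> V k \<in> borel_measurable M" using iV unfolding indep_vars_def2 by blast
  show Xm: "\<And>i. i < n \<Longrightarrow> (\<lambda>\<omega>. X \<omega> i j) \<in> borel_measurable M" using Um by (simp add: U_def)
  show Rm: "\<And>i. i < n \<Longrightarrow> (\<lambda>\<omega>. R \<omega> i j) \<in> borel_measurable M"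
  proof -
    fix i assume "i < n"
    then have "V (i, j) \<in> borel_measurable M" using Vm j by (simp add: K_def)
    then show "(\<lambda>\<omega>. R \<omega> i j) \<in> borel_measurable M" by (simp add: V_def)
  qed
  define A where "A = (\<lambda>\<omega>. restrict (\<lambda>(i, j). X \<omega> i j) K)"
  define B where "B = (\<lambda>\<omega>. restrict (\<lambda>(i, j). R \<omega> i j) K)"
  have XRi: "indep_var (PiM K (\<lambda>_. borel)) A (PiM K (\<lambda>_. borel)) B"
    using XR_indep by (simp add: A_def B_def K_def)
  show "\<And>i. i < n \<Longrightarrow> indep_var borel (\<lambda>\<omega>. R \<omega> i j) borel (\<lambda>\<omega>. X \<omega> i j)"
  proof -
    fix i assume i: "i < n"
    have iK: "(i, j) \<in> K" using i j by (simp add: K_def)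
    have "indep_var borel ((\<lambda>m. m (i,j)) \<circ> A) borel ((\<lambda>m. m (i,j)) \<circ> B)"
      by (rule indep_var_compose[OF XRi]) (use iK in auto)
    moreover have "((\<lambda>m. m (i,j)) \<circ> A) = (\<lambda>\<omega>. X \<omega> i j)" "((\<lambda>m. m (i,j)) \<circ> B) = (\<lambda>\<omega>. R \<omega> i j)"
      using iK by (auto simp: A_def B_def fun_eq_iff)
    ultimately have "indep_var borel (\<lambda>\<omega>. X \<omega> i j) borel (\<lambda>\<omega>. R \<omega> i j)" by simp
    then show "indep_var borel (\<lambda>\<omega>. R \<omega> i j) borel (\<lambda>\<omega>. X \<omega> i j)" by (rule indep_var_swap[OF P])
  qed
  have joint: "measure M ({\<omega>\<in>space M. \<forall>i\<in>Ja. U i \<omega> \<in> BU i} \<inter> {\<omega>\<in>space M. \<forall>k\<in>Jb. V k \<omega> \<in> BV k}) =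
        measure M {\<omega>\<in>space M. \<forall>i\<in>Ja. U i \<omega> \<in> BU i} * measure M {\<omega>\<in>space M. \<forall>k\<in>Jb. V k \<omega> \<in> BV k}"
    if Ja: "finite Ja" "Ja \<subseteq> {..<n}" and Jb: "finite Jb" "Jb \<subseteq> K"
      and BU: "\<And>i. i \<in> Ja \<Longrightarrow> BU i \<in> sets borel" and BV: "\<And>k. k \<in> Jb \<Longrightarrow> BV k \<in> sets borel"
    for Ja Jb BU BV
  proof -
    define Xa where "Xa = {m \<in> space (PiM K (\<lambda>_. borel :: real measure)). \<forall>i\<in>Ja. m (i,j) \<in> BU i}"
    define Xb where "Xb = {m \<in> space (PiM K (\<lambda>_. borel :: real measure)). \<forall>k\<in>Jb. m k \<in> BV k}"
    have Xa: "Xa \<in> sets (PiM K (\<lambda>_. borel))"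
    proof -
      have "\<And>i. i \<in> Ja \<Longrightarrow> (\<lambda>m. m (i,j)) \<in> PiM K (\<lambda>_. borel :: real measure) \<rightarrow>\<^sub>M borel"
        using Ja j by (intro measurable_component_singleton) (auto simp: K_def)
      then show ?thesis unfolding Xa_def using Ja BU by measurable
    qed
    have Xb: "Xb \<in> sets (PiM K (\<lambda>_. borel))"
    proof -
      have "\<And>k. k \<in> Jb \<Longrightarrow> (\<lambda>m. m k) \<in> PiM K (\<lambda>_. borel :: real measure) \<rightarrow>\<^sub>M borel"
        using Jb by (intro measurable_component_singleton) auto
      then show ?thesis unfolding Xb_def using Jb BV by measurable
    qed
    have eA: "A -` Xa \<inter> space M = {\<omega>\<in>space M. \<forall>i\<in>Ja. U i \<omega> \<in> BU i}"
      using Ja j by (auto simp: Xa_def A_def U_def space_PiM K_def subset_eq)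
    have eB: "B -` Xb \<inter> space M = {\<omega>\<in>space M. \<forall>k\<in>Jb. V k \<omega> \<in> BV k}"
      using Jb by (auto simp: Xb_def B_def V_def space_PiM subset_eq split: prod.splits)
    have eAB: "(\<lambda>x. (A x, B x)) -` (Xa \<times> Xb) \<inter> space M =
       {\<omega>\<in>space M. \<forall>i\<in>Ja. U i \<omega> \<in> BU i} \<inter> {\<omega>\<in>space M. \<forall>k\<in>Jb. V k \<omega> \<in> BV k}"
      using eA eB by auto
    show ?thesis using indep_varD[OF XRi Xa Xb] unfolding eA eB eAB .
  qed
  have ind: "indep_sets
     (\<lambda>x. case x of Inl i \<Rightarrow> {U i -` A \<inter> space M | A. A \<in> sets borel}
                  | Inr k \<Rightarrow> {V k -` A \<inter> space M | A. A \<in> sets borel})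
     (Inl ` {..<n} \<union> Inr ` K)"
    by (rule joint_indep_sets[OF P iU iV joint]) auto
  have "indep_vars (\<lambda>_. borel) (\<lambda>i \<omega>. (V ((\<lambda>i. (i, j)) i) \<omega> * U i \<omega> / c)\<^sup>2) {..<n}"
    by (rule indep_vars_pairs[OF P ind]) (use Um Vm j in \<open>auto simp: K_def inj_on_def\<close>)
  then show "indep_vars (\<lambda>_. borel) (\<lambda>i \<omega>. (R \<omega> i j * X \<omega> i j / c)\<^sup>2) {..<n}"
    by (simp add: U_def V_def)
qed




lemma per_n:
  fixes M :: "'a measure" and p n :: nat and X R :: "'a \<Rightarrow> nat \<Rightarrow> nat \<Rightarrow> real"
    and \<Sigma> :: "nat \<Rightarrow> nat \<Rightarrow> real" and \<sigma> C :: real and \<rho> :: "nat \<Rightarrow> real"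
  assumes P: "prob_space M" and p2: "p \<ge> 2" and n1: "n \<ge> 1"
    and rows_indep: "prob_space.indep_vars M (\<lambda>_. PiM {..<p} (\<lambda>_. borel))
                 (\<lambda>i \<omega>. restrict (\<lambda>j. X \<omega> i j) {..<p}) {..<n}"
    and rows_cov: "\<And>i. i < n \<Longrightarrow> mean_zero_cov M p (\<lambda>\<omega> j. X \<omega> i j) \<Sigma>"
    and rows_subg: "\<And>i. i < n \<Longrightarrow> subgaussian_vec M p (\<lambda>\<omega> j. X \<omega> i j) \<sigma>"
    and rho_pos: "\<And>j. j < p \<Longrightarrow> 0 < \<rho> j \<and> \<rho> j \<le> 1"
    and R_indep: "prob_space.indep_vars M (\<lambda>_. borel)
                 (\<lambda>(i, j) \<omega>. R \<omega> i j) ({..<n} \<times> {..<p})"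
    and R_01: "\<And>i j \<omega>. i < n \<Longrightarrow> j < p \<Longrightarrow> \<omega> \<in> space M \<Longrightarrow> R \<omega> i j \<in> {0, 1}"
    and R_bern: "\<And>i j. i < n \<Longrightarrow> j < p \<Longrightarrow> measure M {\<omega> \<in> space M. R \<omega> i j = 1} = \<rho> j"
    and XR_indep: "prob_space.indep_var M
          (PiM ({..<n} \<times> {..<p}) (\<lambda>_. borel)) (\<lambda>\<omega>. restrict (\<lambda>(i, j). X \<omega> i j) ({..<n} \<times> {..<p}))
          (PiM ({..<n} \<times> {..<p}) (\<lambda>_. borel)) (\<lambda>\<omega>. restrict (\<lambda>(i, j). R \<omega> i j) ({..<n} \<times> {..<p}))"
    and \<sigma>: "\<sigma> \<noteq> 0" and C: "C > 0"
    and cond: "C\<^sup>2 * (ln (real p) / (Min (\<rho> ` {..<p}) * real n)) \<le> 64 * (exp 1)\<^sup>2"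
  shows "measure M {\<omega> \<in> space M. \<bar>Max ((\<lambda>j. \<bar>(1 - \<rho> j) * ((1 / real n) *
                 (\<Sum>i<n. (R \<omega> i j * X \<omega> i j / \<rho> j)\<^sup>2))
               - (1 / \<rho> j - 1) * \<Sigma> j j\<bar>) ` {..<p})\<bar>
          > C * (\<sigma>\<^sup>2 * sqrt (ln (real p) / ((Min (\<rho> ` {..<p})) ^ 3 * real n)))}
     \<le> real p * (2 * exp (- (C\<^sup>2 * ln (real p) / (64 * (exp 1)\<^sup>2))))"
proof -
  interpret prob_space M by (rule P)
  define r where "r = Min (\<rho> ` {..<p})"
  define L where "L = ln (real p)"
  define u where "u = sqrt (L / (r ^ 3 * real n))"
  define w where "w = C * (\<sigma>\<^sup>2 * u)"
  define a where "a = 2 * exp 1 * \<sigma>\<^sup>2"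
  define Y where "Y = (\<lambda>j \<omega>. \<bar>(1 - \<rho> j) * ((1 / real n) *
                 (\<Sum>i<n. (R \<omega> i j * X \<omega> i j / \<rho> j)\<^sup>2)) - (1 / \<rho> j - 1) * \<Sigma> j j\<bar>)"
  have pne: "\<rho> ` {..<p} \<noteq> {}" using p2 by (auto simp: lessThan_empty_iff)
  have r0: "0 < r" unfolding r_def using pne rho_pos by (subst Min_gr_iff) auto
  have rle: "\<And>j. j < p \<Longrightarrow> r \<le> \<rho> j" unfolding r_def by (rule Min_le) auto
  have L0: "0 < L" unfolding L_def using p2 by simp
  have nn: "0 < real n" using n1 by simp
  have s2: "0 < \<sigma>\<^sup>2" using \<sigma> by simp
  have a0: "0 < a" using s2 by (simp add: a_def)
  have u2: "u\<^sup>2 = L / (r ^ 3 * real n)" unfolding u_def using L0 r0 nn by simp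
  have u0: "0 < u" unfolding u_def using L0 r0 nn by simp
  have w0: "0 < w" unfolding w_def using C s2 u0 by simp
  have Cur: "C * u * r \<le> 8 * exp 1"
  proof (rule power2_le_imp_le)
    have "(C * u * r)\<^sup>2 = C\<^sup>2 * (L / (r ^ 3 * real n)) * r\<^sup>2"
      by (simp only: power_mult_distrib u2)
    also have "\<dots> = C\<^sup>2 * (L / (r * real n))"
      using r0 nn by (simp add: power2_eq_square power3_eq_cube field_simps)
    finally have "(C * u * r)\<^sup>2 = C\<^sup>2 * (L / (r * real n))" .
    also have "\<dots> \<le> (8 * exp 1)\<^sup>2" using cond by (simp add: L_def r_def power_mult_distrib)
    finally show "(C * u * r)\<^sup>2 \<le> (8 * exp 1)\<^sup>2" .
  qed simp
  have wr: "w * r / (8 * a) \<le> 1/2"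
  proof -
    have "w * r / (8 * a) = C * u * r / (16 * exp 1)" using s2 by (simp add: w_def a_def field_simps)
    also have "\<dots> \<le> 8 * exp 1 / (16 * exp 1)" using Cur by (intro divide_right_mono) auto
    finally show ?thesis by simp
  qed
  have expo: "real n * w\<^sup>2 * r ^ 3 / (16 * a\<^sup>2) = C\<^sup>2 * L / (64 * (exp 1)\<^sup>2)"
  proof -
    have "real n * w\<^sup>2 * r ^ 3 / (16 * a\<^sup>2) = real n * (C\<^sup>2 * ((\<sigma>\<^sup>2)\<^sup>2 * (L / (r ^ 3 * real n)))) * r ^ 3 / (16 * (2 * exp 1 * \<sigma>\<^sup>2)\<^sup>2)"
      by (simp only: w_def a_def power_mult_distrib u2)
    also have "\<dots> = C\<^sup>2 * L / (64 * (exp 1)\<^sup>2)"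
      using s2 r0 nn \<sigma> by (simp add: power2_eq_square power3_eq_cube field_simps)
    finally show ?thesis .
  qed
  have tail: "measure M {\<omega>\<in>space M. w < Y j \<omega>} \<le> 2 * exp (- (C\<^sup>2 * L / (64 * (exp 1)\<^sup>2)))"
    if j: "j < p" for j
  proof -
    note cf = col_facts[OF P rows_indep R_indep XR_indep j]
    have mgf: "integrable M (\<lambda>\<omega>. exp (t * X \<omega> i j)) \<and> (\<integral>\<omega>. exp (t * X \<omega> i j) \<partial>M) \<le> exp (\<sigma>\<^sup>2 * t\<^sup>2 / 2)"
      if i: "i < n" for i t
    proof -
      define v where "v = (\<lambda>j'. if j' = j then 1 else (0::real))"
      have v1: "(\<Sum>j'<p. (v j')\<^sup>2) = 1"
      proof -
        have "(\<Sum>j'<p. (v j')\<^sup>2) = (\<Sum>j'<p. if j' = j then 1 else 0)" by (rule sum.cong) (auto simp: v_def)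
        then show ?thesis using j by simp
      qed
      have vx: "(\<Sum>j'<p. v j' * X \<omega> i j') = X \<omega> i j" for \<omega>
      proof -
        have "(\<Sum>j'<p. v j' * X \<omega> i j') = (\<Sum>j'<p. if j' = j then X \<omega> i j else 0)" by (rule sum.cong) (auto simp: v_def)
        then show ?thesis using j by simp
      qed
      have h: "\<forall>t. integrable M (\<lambda>\<omega>. exp (t * (\<Sum>j'<p. v j' * X \<omega> i j'))) \<and>
           (\<integral>\<omega>. exp (t * (\<Sum>j'<p. v j' * X \<omega> i j')) \<partial>M) \<le> exp (\<sigma>\<^sup>2 * t\<^sup>2 / 2)"
        using rows_subg[OF i, unfolded subgaussian_vec_def, rule_format, OF v1] by blast
      show ?thesis using h[rule_format, of t] by (simp only: vx)
    qed
    have momI: "\<And>i k. i < n \<Longrightarrow> k \<ge> 1 \<Longrightarrow> integrable M (\<lambda>\<omega>. X \<omega> i j ^ (2*k))"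
      by (rule moment_bound(1)[OF P cf(2) s2 mgf]) auto
    have momB: "\<And>i k. i < n \<Longrightarrow> k \<ge> 1 \<Longrightarrow> (\<integral>\<omega>. X \<omega> i j ^ (2*k) \<partial>M) \<le> 2 * fact k * a ^ k"
      unfolding a_def by (rule moment_bound(2)[OF P cf(2) s2 mgf]) auto
    have cov: "\<And>i. i < n \<Longrightarrow> (\<integral>\<omega>. X \<omega> i j ^ 2 \<partial>M) = \<Sigma> j j"
      using rows_cov j unfolding mean_zero_cov_def by (simp add: power2_eq_square)
    have "measure M {\<omega>\<in>space M. w < \<bar>(1 - \<rho> j) * ((1 / real n) * (\<Sum>i<n. (R \<omega> i j * X \<omega> i j / \<rho> j)\<^sup>2))
                 - (1 / \<rho> j - 1) * \<Sigma> j j\<bar>}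
         \<le> 2 * exp (- (real n * w\<^sup>2 * r ^ 3 / (16 * a\<^sup>2)))"
      by (rule col_tail[where M=M and X=X and R=R and j=j and \<rho>="\<rho> j" and n=n and c="\<Sigma> j j" and a=a and r=r and w=w, OF P n1 cf(1)[of "\<rho> j"] cf(2) cf(3) cf(4) _ _ momI momB cov r0 rle[OF j] _ a0 w0 wr])
         (use R_01 R_bern j rho_pos in auto)
    then show ?thesis unfolding expo Y_def .
  qed
  have Ym: "\<And>j. j < p \<Longrightarrow> Y j \<in> borel_measurable M"
  proof -
    fix j assume j: "j < p"
    note cf = col_facts[OF P rows_indep R_indep XR_indep j]
    show "Y j \<in> borel_measurable M" unfolding Y_def
      using cf(2) cf(3) by (intro borel_measurable_abs borel_measurable_diff borel_measurable_times
          borel_measurable_sum borel_measurable_power borel_measurable_divide) auto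
  qed
  have ev: "\<And>j. j < p \<Longrightarrow> {\<omega>\<in>space M. w < Y j \<omega>} \<in> events" using Ym by measurable
  have sub: "{\<omega> \<in> space M. \<bar>Max ((\<lambda>j. Y j \<omega>) ` {..<p})\<bar> > w} \<subseteq> (\<Union>j<p. {\<omega>\<in>space M. w < Y j \<omega>})"
  proof safe
    fix \<omega> assume \<omega>: "\<omega> \<in> space M" and big: "\<bar>Max ((\<lambda>j. Y j \<omega>) ` {..<p})\<bar> > w"
    have "Max ((\<lambda>j. Y j \<omega>) ` {..<p}) \<in> (\<lambda>j. Y j \<omega>) ` {..<p}" using p2 by (intro Max_in) (auto simp: lessThan_empty_iff)
    then obtain j where j: "j < p" and eq: "Max ((\<lambda>j. Y j \<omega>) ` {..<p}) = Y j \<omega>" by auto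
    have "\<bar>Y j \<omega>\<bar> = Y j \<omega>" by (simp add: Y_def)
    then show "\<omega> \<in> (\<Union>j<p. {\<omega>\<in>space M. w < Y j \<omega>})" using big eq j \<omega> by auto
  qed
  have "measure M {\<omega> \<in> space M. \<bar>Max ((\<lambda>j. Y j \<omega>) ` {..<p})\<bar> > w} \<le> measure M (\<Union>j<p. {\<omega>\<in>space M. w < Y j \<omega>})"
    by (rule finite_measure_mono[OF sub]) (use ev in auto)
  also have "\<dots> \<le> (\<Sum>j<p. measure M {\<omega>\<in>space M. w < Y j \<omega>})"
    by (rule measure_UNION_le) (use ev in auto)
  also have "\<dots> \<le> (\<Sum>j<p. 2 * exp (- (C\<^sup>2 * L / (64 * (exp 1)\<^sup>2))))"
    by (rule sum_mono) (use tail in auto)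
  also have "\<dots> = real p * (2 * exp (- (C\<^sup>2 * L / (64 * (exp 1)\<^sup>2))))" by simp
  finally show ?thesis unfolding Y_def w_def u_def r_def L_def .
qed




lemma per_n0:
  fixes M :: "'a measure" and p n :: nat and X R :: "'a \<Rightarrow> nat \<Rightarrow> nat \<Rightarrow> real"
    and \<Sigma> :: "nat \<Rightarrow> nat \<Rightarrow> real" and \<sigma> C :: real and \<rho> :: "nat \<Rightarrow> real"
  assumes P: "prob_space M" and p2: "p \<ge> 2" and n1: "n \<ge> 1"
    and rows_indep: "prob_space.indep_vars M (\<lambda>_. PiM {..<p} (\<lambda>_. borel))
                 (\<lambda>i \<omega>. restrict (\<lambda>j. X \<omega> i j) {..<p}) {..<n}"
    and rows_cov: "\<And>i. i < n \<Longrightarrow> mean_zero_cov M p (\<lambda>\<omega> j. X \<omega> i j) \<Sigma>"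
    and rows_subg: "\<And>i. i < n \<Longrightarrow> subgaussian_vec M p (\<lambda>\<omega> j. X \<omega> i j) \<sigma>"
    and rho_pos: "\<And>j. j < p \<Longrightarrow> 0 < \<rho> j \<and> \<rho> j \<le> 1"
    and R_indep: "prob_space.indep_vars M (\<lambda>_. borel)
                 (\<lambda>(i, j) \<omega>. R \<omega> i j) ({..<n} \<times> {..<p})"
    and R_01: "\<And>i j \<omega>. i < n \<Longrightarrow> j < p \<Longrightarrow> \<omega> \<in> space M \<Longrightarrow> R \<omega> i j \<in> {0, 1}"
    and R_bern: "\<And>i j. i < n \<Longrightarrow> j < p \<Longrightarrow> measure M {\<omega> \<in> space M. R \<omega> i j = 1} = \<rho> j"
    and XR_indep: "prob_space.indep_var M
          (PiM ({..<n} \<times> {..<p}) (\<lambda>_. borel)) (\<lambda>\<omega>. restrict (\<lambda>(i, j). X \<omega> i j) ({..<n} \<times> {..<p}))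
          (PiM ({..<n} \<times> {..<p}) (\<lambda>_. borel)) (\<lambda>\<omega>. restrict (\<lambda>(i, j). R \<omega> i j) ({..<n} \<times> {..<p}))"
    and \<sigma>: "\<sigma> = 0"
  shows "measure M {\<omega> \<in> space M. \<bar>Max ((\<lambda>j. \<bar>(1 - \<rho> j) * ((1 / real n) *
                 (\<Sum>i<n. (R \<omega> i j * X \<omega> i j / \<rho> j)\<^sup>2))
               - (1 / \<rho> j - 1) * \<Sigma> j j\<bar>) ` {..<p})\<bar>
          > C * (\<sigma>\<^sup>2 * sqrt (ln (real p) / ((Min (\<rho> ` {..<p})) ^ 3 * real n)))}
     \<le> 0"
proof -
  interpret prob_space M by (rule P)
  define Y where "Y = (\<lambda>j \<omega>. \<bar>(1 - \<rho> j) * ((1 / real n) *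
                 (\<Sum>i<n. (R \<omega> i j * X \<omega> i j / \<rho> j)\<^sup>2)) - (1 / \<rho> j - 1) * \<Sigma> j j\<bar>)"
  have Xm: "\<And>i j. i < n \<Longrightarrow> j < p \<Longrightarrow> (\<lambda>\<omega>. X \<omega> i j) \<in> borel_measurable M"
    using col_facts(2)[OF P rows_indep R_indep XR_indep] by blast
  have Rm: "\<And>i j. i < n \<Longrightarrow> j < p \<Longrightarrow> (\<lambda>\<omega>. R \<omega> i j) \<in> borel_measurable M"
    using col_facts(3)[OF P rows_indep R_indep XR_indep] by blast
  have EX: "(\<integral>\<omega>. X \<omega> i j ^ 2 \<partial>M) = 0 \<and> integrable M (\<lambda>\<omega>. X \<omega> i j ^ 2) \<and> \<Sigma> j j = (\<integral>\<omega>. X \<omega> i j ^ 2 \<partial>M)"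
    if i: "i < n" and j: "j < p" for i j
  proof -
    have mgf: "integrable M (\<lambda>\<omega>. exp (t * X \<omega> i j)) \<and> (\<integral>\<omega>. exp (t * X \<omega> i j) \<partial>M) \<le> exp (v * t\<^sup>2 / 2)"
      if v: "0 < v" for t v
    proof -
      define e where "e = (\<lambda>j'. if j' = j then 1 else (0::real))"
      have v1: "(\<Sum>j'<p. (e j')\<^sup>2) = 1"
      proof -
        have "(\<Sum>j'<p. (e j')\<^sup>2) = (\<Sum>j'<p. if j' = j then 1 else 0)" by (rule sum.cong) (auto simp: e_def)
        then show ?thesis using j by simp
      qed
      have vx: "(\<Sum>j'<p. e j' * X \<omega> i j') = X \<omega> i j" for \<omega>
      proof -
        have "(\<Sum>j'<p. e j' * X \<omega> i j') = (\<Sum>j'<p. if j' = j then X \<omega> i j else 0)" by (rule sum.cong) (auto simp: e_def)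
        then show ?thesis using j by simp
      qed
      have h: "\<forall>t. integrable M (\<lambda>\<omega>. exp (t * (\<Sum>j'<p. e j' * X \<omega> i j'))) \<and>
           (\<integral>\<omega>. exp (t * (\<Sum>j'<p. e j' * X \<omega> i j')) \<partial>M) \<le> exp (\<sigma>\<^sup>2 * t\<^sup>2 / 2)"
        using rows_subg[OF i, unfolded subgaussian_vec_def, rule_format, OF v1] by blast
      have "exp (\<sigma>\<^sup>2 * t\<^sup>2 / 2) \<le> exp (v * t\<^sup>2 / 2)" using \<sigma> v by simp
      moreover have "integrable M (\<lambda>\<omega>. exp (t * X \<omega> i j)) \<and> (\<integral>\<omega>. exp (t * X \<omega> i j) \<partial>M) \<le> exp (\<sigma>\<^sup>2 * t\<^sup>2 / 2)"
        using h[rule_format, of t] by (simp only: vx)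
      ultimately show ?thesis by linarith
    qed
    have le: "(\<integral>\<omega>. X \<omega> i j ^ 2 \<partial>M) \<le> 4 * exp 1 * v" if v: "0 < v" for v
      using moment_bound(2)[OF P Xm[OF i j] v mgf[OF v], of 1] by simp
    have ge: "0 \<le> (\<integral>\<omega>. X \<omega> i j ^ 2 \<partial>M)" by (rule integral_nonneg_AE) auto
    have z: "(\<integral>\<omega>. X \<omega> i j ^ 2 \<partial>M) = 0"
    proof (rule ccontr)
      assume "(\<integral>\<omega>. X \<omega> i j ^ 2 \<partial>M) \<noteq> 0"
      then have pos: "0 < (\<integral>\<omega>. X \<omega> i j ^ 2 \<partial>M)" using ge by linarith
      have "(\<integral>\<omega>. X \<omega> i j ^ 2 \<partial>M) \<le> 4 * exp 1 * ((\<integral>\<omega>. X \<omega> i j ^ 2 \<partial>M) / (8 * exp 1))"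
        by (rule le) (use pos in simp)
      then show False using pos by simp
    qed
    have cv: "integrable M (\<lambda>\<omega>. X \<omega> i j * X \<omega> i j) \<and> (\<integral>\<omega>. X \<omega> i j * X \<omega> i j \<partial>M) = \<Sigma> j j"
      using rows_cov[OF i] j unfolding mean_zero_cov_def by blast
    show ?thesis using z cv by (simp add: power2_eq_square)
  qed
  have AE0: "AE \<omega> in M. \<forall>ij\<in>{..<n} \<times> {..<p}. X \<omega> (fst ij) (snd ij) = 0"
  proof (rule AE_finite_allI)
    fix ij assume ij: "ij \<in> {..<n} \<times> {..<p}"
    then obtain i j where ij': "ij = (i, j)" "i < n" "j < p" by auto
    have "AE \<omega> in M. X \<omega> i j ^ 2 = 0"
      using EX[OF ij'(2,3)] integral_nonneg_eq_0_iff_AE[of M "\<lambda>\<omega>. X \<omega> i j ^ 2"] by auto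
    then show "AE \<omega> in M. X \<omega> (fst ij) (snd ij) = 0" using ij' by auto
  qed simp
  have Ym: "\<And>j. j < p \<Longrightarrow> Y j \<in> borel_measurable M"
  proof -
    fix j assume j: "j < p"
    show "Y j \<in> borel_measurable M" unfolding Y_def
      using Xm Rm j by (intro borel_measurable_abs borel_measurable_diff borel_measurable_times
          borel_measurable_sum borel_measurable_power borel_measurable_divide) auto
  qed
  have ev: "\<And>j. j < p \<Longrightarrow> {\<omega>\<in>space M. 0 < Y j \<omega>} \<in> events" using Ym by measurable
  have null: "measure M {\<omega>\<in>space M. 0 < Y j \<omega>} = 0" if j: "j < p" for j
  proof -
    have "AE \<omega> in M. \<omega> \<notin> {\<omega>\<in>space M. 0 < Y j \<omega>}"
    proof (rule eventually_mono[OF AE0], safe)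
      fix \<omega> assume all: "\<forall>ij\<in>{..<n} \<times> {..<p}. X \<omega> (fst ij) (snd ij) = 0" and pos: "0 < Y j \<omega>"
      have "\<And>i. i < n \<Longrightarrow> X \<omega> i j = 0" using all j by force
      moreover have "\<Sigma> j j = 0" using EX[of 0 j] n1 j by simp
      ultimately have "Y j \<omega> = 0" by (simp add: Y_def)
      then show False using pos by simp
    qed
    then have "emeasure M {\<omega>\<in>space M. 0 < Y j \<omega>} = 0"
      by (subst (asm) AE_iff_measurable[OF ev[OF j]]) auto
    then show ?thesis by (simp add: measure_def)
  qed
  have sub: "{\<omega> \<in> space M. \<bar>Max ((\<lambda>j. Y j \<omega>) ` {..<p})\<bar> > C * (\<sigma>\<^sup>2 * sqrt (ln (real p) / ((Min (\<rho> ` {..<p})) ^ 3 * real n)))}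
      \<subseteq> (\<Union>j<p. {\<omega>\<in>space M. 0 < Y j \<omega>})"
  proof safe
    fix \<omega> assume \<omega>: "\<omega> \<in> space M"
      and big: "\<bar>Max ((\<lambda>j. Y j \<omega>) ` {..<p})\<bar> > C * (\<sigma>\<^sup>2 * sqrt (ln (real p) / ((Min (\<rho> ` {..<p})) ^ 3 * real n)))"
    have "Max ((\<lambda>j. Y j \<omega>) ` {..<p}) \<in> (\<lambda>j. Y j \<omega>) ` {..<p}" using p2 by (intro Max_in) (auto simp: lessThan_empty_iff)
    then obtain j where j: "j < p" and eq: "Max ((\<lambda>j. Y j \<omega>) ` {..<p}) = Y j \<omega>" by auto
    have "\<bar>Y j \<omega>\<bar> = Y j \<omega>" by (simp add: Y_def)
    then show "\<omega> \<in> (\<Union>j<p. {\<omega>\<in>space M. 0 < Y j \<omega>})" using big eq j \<omega> \<sigma> by auto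
  qed
  have "measure M {\<omega> \<in> space M. \<bar>Max ((\<lambda>j. Y j \<omega>) ` {..<p})\<bar> > C * (\<sigma>\<^sup>2 * sqrt (ln (real p) / ((Min (\<rho> ` {..<p})) ^ 3 * real n)))}
      \<le> measure M (\<Union>j<p. {\<omega>\<in>space M. 0 < Y j \<omega>})"
    by (rule finite_measure_mono[OF sub]) (use ev in auto)
  also have "\<dots> \<le> (\<Sum>j<p. measure M {\<omega>\<in>space M. 0 < Y j \<omega>})"
    by (rule measure_UNION_le) (use ev in auto)
  also have "\<dots> = 0" using null by simp
  finally show ?thesis unfolding Y_def .
qed


lemma final_bound:
  fixes p m :: nat assumes p: "p \<ge> 2" and m: "m \<ge> 1"
  shows "real p * (2 * exp (- ((8 * exp 1 * real m)\<^sup>2 * ln (real p) / (64 * (exp 1)\<^sup>2)))) \<le> 4 / 2 ^ m"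
proof -
  define L where "L = ln (real p)"
  have L0: "0 \<le> L" using p by (simp add: L_def)
  have e1: "(8 * exp 1 * real m)\<^sup>2 * L / (64 * (exp 1)\<^sup>2) = real m ^ 2 * L"
    by (simp add: power_mult_distrib field_simps)
  have "real m * L \<le> real m ^ 2 * L"
    using m L0 by (intro mult_right_mono) (auto simp: power2_eq_square)
  then have "exp (- (real m ^ 2 * L)) \<le> exp (- (real m * L))" by simp
  also have "exp (- (real m * L)) = 1 / real p ^ m"
  proof -
    have "exp (real m * L) = exp L ^ m" by (simp add: exp_of_nat_mult)
    also have "exp L = real p" using p by (simp add: L_def)
    finally show ?thesis by (simp add: exp_minus field_simps)
  qed
  finally have b: "exp (- (real m ^ 2 * L)) \<le> 1 / real p ^ m" .
  have pm: "real p ^ m = real p * real p ^ (m - 1)" using m by (cases m) auto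
  have pm2: "(2::real) ^ (m - 1) \<le> real p ^ (m - 1)" using p by (intro power_mono) auto
  have "real p * (2 * exp (- (real m ^ 2 * L))) \<le> real p * (2 * (1 / real p ^ m))"
    using b p by (intro mult_left_mono) auto
  also have "\<dots> = 2 / real p ^ (m - 1)" using p by (simp add: pm field_simps)
  also have "\<dots> \<le> 2 / 2 ^ (m - 1)" using pm2 p by (intro divide_left_mono) (auto intro!: mult_pos_pos)
  also have "\<dots> = 4 / 2 ^ m" using m by (cases m) auto
  finally show ?thesis unfolding e1[unfolded L_def] L_def .
qed

theorem lemma10:
  fixes M :: "nat \<Rightarrow> 'a measure"
    and p :: "nat \<Rightarrow> nat"
    and X R :: "nat \<Rightarrow> 'a \<Rightarrow> nat \<Rightarrow> nat \<Rightarrow> real"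
    and \<Sigma>\<^sub>0 :: "nat \<Rightarrow> nat \<Rightarrow> nat \<Rightarrow> real"
    and \<sigma>\<^sub>x :: "nat \<Rightarrow> real"
    and \<rho> :: "nat \<Rightarrow> nat \<Rightarrow> real"
  assumes prob: "\<And>n. prob_space (M n)"
    and p_ge2: "\<And>n. p n \<ge> 2"
    \<comment> \<open>(A2): rows of X independent, identically distributed, zero-mean sub-Gaussian\<close>
    and rows_indep: "\<And>n. prob_space.indep_vars (M n) (\<lambda>_. PiM {..<p n} (\<lambda>_. borel))
                 (\<lambda>i \<omega>. restrict (\<lambda>j. X n \<omega> i j) {..<p n}) {..<n}"
    and rows_ident: "\<And>n i. i < n \<Longrightarrow>
          distr (M n) (PiM {..<p n} (\<lambda>_. borel)) (\<lambda>\<omega>. restrict (\<lambda>j. X n \<omega> i j) {..<p n}) =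
          distr (M n) (PiM {..<p n} (\<lambda>_. borel)) (\<lambda>\<omega>. restrict (\<lambda>j. X n \<omega> 0 j) {..<p n})"
    and rows_cov: "\<And>n i. i < n \<Longrightarrow> mean_zero_cov (M n) (p n) (\<lambda>\<omega> j. X n \<omega> i j) (\<Sigma>\<^sub>0 n)"
    and rows_subg: "\<And>n i. i < n \<Longrightarrow> subgaussian_vec (M n) (p n) (\<lambda>\<omega> j. X n \<omega> i j) (\<sigma>\<^sub>x n)"
    \<comment> \<open>(A3): R_ij ~ Bernoulli(rho_j), mutually independent, independent of X\<close>
    and rho_pos: "\<And>n j. j < p n \<Longrightarrow> 0 < \<rho> n j \<and> \<rho> n j \<le> 1"
    and R_indep: "\<And>n. prob_space.indep_vars (M n) (\<lambda>_. borel)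
                 (\<lambda>(i, j) \<omega>. R n \<omega> i j) ({..<n} \<times> {..<p n})"
    and R_01: "\<And>n i j \<omega>. i < n \<Longrightarrow> j < p n \<Longrightarrow> \<omega> \<in> space (M n) \<Longrightarrow> R n \<omega> i j \<in> {0, 1}"
    and R_bern: "\<And>n i j. i < n \<Longrightarrow> j < p n \<Longrightarrow>
          measure (M n) {\<omega> \<in> space (M n). R n \<omega> i j = 1} = \<rho> n j"
    and XR_indep: "\<And>n. prob_space.indep_var (M n)
          (PiM ({..<n} \<times> {..<p n}) (\<lambda>_. borel)) (\<lambda>\<omega>. restrict (\<lambda>(i, j). X n \<omega> i j) ({..<n} \<times> {..<p n}))
          (PiM ({..<n} \<times> {..<p n}) (\<lambda>_. borel)) (\<lambda>\<omega>. restrict (\<lambda>(i, j). R n \<omega> i j) ({..<n} \<times> {..<p n}))"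
    and rate: "(\<lambda>n. ln (real (p n)) / (Min (\<rho> n ` {..<p n}) * real n)) \<longlonglongrightarrow> 0"
  shows "bigO_P M
     (\<lambda>n \<omega>. Max ((\<lambda>j. \<bar>(1 - \<rho> n j) * ((1 / real n) *
                 (\<Sum>i<n. (R n \<omega> i j * X n \<omega> i j / \<rho> n j)\<^sup>2))
               - (1 / \<rho> n j - 1) * \<Sigma>\<^sub>0 n j j\<bar>) ` {..<p n}))
     (\<lambda>n. (\<sigma>\<^sub>x n)\<^sup>2 * sqrt (ln (real (p n)) / ((Min (\<rho> n ` {..<p n})) ^ 3 * real n)))"
  unfolding bigO_P_def
proof (intro allI impI)
  fix \<epsilon> :: real assume \<epsilon>: "\<epsilon> > 0"
  obtain m0 where m0: "4 / \<epsilon> < 2 ^ m0" using real_arch_pow[of 2 "4 / \<epsilon>"] by auto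
  define m where "m = Suc m0"
  have m1: "m \<ge> 1" by (simp add: m_def)
  have pow: "4 / 2 ^ m \<le> \<epsilon>"
  proof -
    have "(2::real) ^ m0 \<le> 2 ^ m" by (simp add: m_def)
    then have "4 / \<epsilon> < 2 ^ m" using m0 by linarith
    then have "4 < \<epsilon> * 2 ^ m" using \<epsilon> by (simp add: divide_less_eq mult.commute)
    then show ?thesis by (simp add: divide_le_eq mult.commute)
  qed
  define C where "C = 8 * exp 1 * real m"
  have C0: "C > 0" using m1 by (simp add: C_def)
  have ev1: "eventually (\<lambda>n. ln (real (p n)) / (Min (\<rho> n ` {..<p n}) * real n) < 1 / (real m)\<^sup>2) sequentially"
    by (rule order_tendstoD(2)[OF rate]) (use m1 in simp)
  have ev2: "eventually (\<lambda>n. n \<ge> 1) sequentially" by (rule eventually_ge_at_top)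
  show "\<exists>C. \<forall>\<^sub>F n in sequentially. measure (M n) {\<omega> \<in> space (M n).
      \<bar>Max ((\<lambda>j. \<bar>(1 - \<rho> n j) * ((1 / real n) * (\<Sum>i<n. (R n \<omega> i j * X n \<omega> i j / \<rho> n j)\<^sup>2))
               - (1 / \<rho> n j - 1) * \<Sigma>\<^sub>0 n j j\<bar>) ` {..<p n})\<bar>
      > C * ((\<sigma>\<^sub>x n)\<^sup>2 * sqrt (ln (real (p n)) / ((Min (\<rho> n ` {..<p n})) ^ 3 * real n)))} \<le> \<epsilon>"
  proof (intro exI[of _ C] eventually_mono[OF eventually_conj[OF ev1 ev2]])
    fix n assume h: "ln (real (p n)) / (Min (\<rho> n ` {..<p n}) * real n) < 1 / (real m)\<^sup>2 \<and> n \<ge> 1"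
    show "measure (M n) {\<omega> \<in> space (M n).
      \<bar>Max ((\<lambda>j. \<bar>(1 - \<rho> n j) * ((1 / real n) * (\<Sum>i<n. (R n \<omega> i j * X n \<omega> i j / \<rho> n j)\<^sup>2))
               - (1 / \<rho> n j - 1) * \<Sigma>\<^sub>0 n j j\<bar>) ` {..<p n})\<bar>
      > C * ((\<sigma>\<^sub>x n)\<^sup>2 * sqrt (ln (real (p n)) / ((Min (\<rho> n ` {..<p n})) ^ 3 * real n)))} \<le> \<epsilon>"
    proof (cases "\<sigma>\<^sub>x n = 0")
      case True
      have "measure (M n) {\<omega> \<in> space (M n).
      \<bar>Max ((\<lambda>j. \<bar>(1 - \<rho> n j) * ((1 / real n) * (\<Sum>i<n. (R n \<omega> i j * X n \<omega> i j / \<rho> n j)\<^sup>2))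
               - (1 / \<rho> n j - 1) * \<Sigma>\<^sub>0 n j j\<bar>) ` {..<p n})\<bar>
      > C * ((\<sigma>\<^sub>x n)\<^sup>2 * sqrt (ln (real (p n)) / ((Min (\<rho> n ` {..<p n})) ^ 3 * real n)))} \<le> 0"
        by (rule per_n0[OF prob p_ge2 _ rows_indep rows_cov rows_subg rho_pos R_indep R_01 R_bern XR_indep True])
           (use h in auto)
      then show ?thesis using \<epsilon> by linarith
    next
      case False
      have cond: "C\<^sup>2 * (ln (real (p n)) / (Min (\<rho> n ` {..<p n}) * real n)) \<le> 64 * (exp 1)\<^sup>2"
      proof -
        have "C\<^sup>2 * (ln (real (p n)) / (Min (\<rho> n ` {..<p n}) * real n)) \<le> C\<^sup>2 * (1 / (real m)\<^sup>2)"
          using h by (intro mult_left_mono) auto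
        also have "\<dots> = 64 * (exp 1)\<^sup>2" using m1 by (simp add: C_def power_mult_distrib)
        finally show ?thesis .
      qed
      have "measure (M n) {\<omega> \<in> space (M n).
      \<bar>Max ((\<lambda>j. \<bar>(1 - \<rho> n j) * ((1 / real n) * (\<Sum>i<n. (R n \<omega> i j * X n \<omega> i j / \<rho> n j)\<^sup>2))
               - (1 / \<rho> n j - 1) * \<Sigma>\<^sub>0 n j j\<bar>) ` {..<p n})\<bar>
      > C * ((\<sigma>\<^sub>x n)\<^sup>2 * sqrt (ln (real (p n)) / ((Min (\<rho> n ` {..<p n})) ^ 3 * real n)))}
        \<le> real (p n) * (2 * exp (- (C\<^sup>2 * ln (real (p n)) / (64 * (exp 1)\<^sup>2))))"
        by (rule per_n[OF prob p_ge2 _ rows_indep rows_cov rows_subg rho_pos R_indep R_01 R_bern XR_indep False C0 cond])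
           (use h in auto)
      also have "\<dots> \<le> 4 / 2 ^ m" unfolding C_def by (rule final_bound[OF p_ge2 m1])
      finally show ?thesis using pow by linarith
    qed
  qed
qed


end
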